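(* Let $H$ be a Hilbert space, let $\mathbf{a}=[a_1,\dots,a_\ell]$ be a row and $\mathbf{b}=[b_1,\dots,b_\ell]^t$ a column of operators $a_j,b_j\in\mathcal{B}(H)$, and let $Tx=\sum_{j=1}^\ell a_jxb_j$ ($x\in\mathcal{B}(H)$). Then \[ \|T\|=\sup\left\{\operatorname{tgm}\big(Q(\mathbf{a}^*,\xi),Q(\mathbf{b},\eta)\big):\xi,\eta\in H,\ \|\xi\|=\|\eta\|=1\right\}. \]
   Context: For a column $\mathbf{c}=[c_1,\dots,c_\ell]^t$ of operators in $\mathcal{B}(H)$ and $\eta\in H$, $Q(\mathbf{c},\eta)=(\langle c_i^*c_j\eta,\eta\rangle)_{i,j=1}^\ell=(\langle c_j\eta,c_i\eta\rangle)_{i,j=1}^\ell\in M_\ell(\mathbb{C})$; $\mathbf{a}^*$ denotes the column $[a_1^*,\dots,a_\ell^*]^t$, so $Q(\mathbf{a}^*,\xi)=(\langle a_j^*\xi,a_i^*\xi\rangle)_{i,j=1}^\ell$. For positive semidefinite $\ell\times\ell$ matrices $X,Y$, the tracial geometric mean is $\operatorname{tgm}(X,Y)=\operatorname{trace}\sqrt{\sqrt{X}\,Y\sqrt{X}}$ (positive semidefinite square roots). $\|T\|$ is the operator norm of $T$ on $\mathcal{B}(H)$. *)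

theory Defs
  imports "HOL-Analysis.Analysis"
begin

text \<open>HOL-Analysis only provides real inner product spaces, so complex
  (pre-)Hilbert spaces are introduced as a type class.  Convention: the inner
  product is linear in the FIRST argument and conjugate linear in the second.\<close>

class complex_vector = real_vector +
  fixes scaleC :: "complex \<Rightarrow> 'a \<Rightarrow> 'a"
  assumes scaleC_add_right: "scaleC c (x + y) = scaleC c x + scaleC c y"
    and scaleC_add_left: "scaleC (c + d) x = scaleC c x + scaleC d x"
    and scaleC_scaleC: "scaleC c (scaleC d x) = scaleC (c * d) x"
    and scaleC_one: "scaleC 1 x = x"
    and scaleR_scaleC: "scaleR r x = scaleC (complex_of_real r) x"

class complex_inner = complex_vector + real_normed_vector +
  fixes cinner :: "'a \<Rightarrow> 'a \<Rightarrow> complex"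
  assumes cinner_add_left: "cinner (x + y) z = cinner x z + cinner y z"
    and cinner_scaleC_left: "cinner (scaleC c x) y = c * cinner x y"
    and cinner_commute: "cinner y x = cnj (cinner x y)"
    and cinner_ge_zero: "0 \<le> Re (cinner x x)"
    and cinner_eq_zero_iff: "cinner x x = 0 \<longleftrightarrow> x = 0"
    and norm_eq_sqrt_cinner: "norm x = sqrt (Re (cinner x x))"

instantiation complex :: complex_inner
begin
definition scaleC_complex_def: "scaleC c (x::complex) = c * x"
definition cinner_complex_def: "cinner (x::complex) y = x * cnj y"
instance
proof
  fix x y z :: complex and c d :: complex and r :: real
  show "scaleC c (x + y) = scaleC c x + scaleC c y" by (simp add: scaleC_complex_def algebra_simps)
  show "scaleC (c + d) x = scaleC c x + scaleC d x" by (simp add: scaleC_complex_def algebra_simps)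
  show "scaleC c (scaleC d x) = scaleC (c * d) x" by (simp add: scaleC_complex_def algebra_simps)
  show "scaleC 1 x = x" by (simp add: scaleC_complex_def)
  show "scaleR r x = scaleC (complex_of_real r) x" by (simp add: scaleC_complex_def scaleR_conv_of_real)
  show "cinner (x + y) z = cinner x z + cinner y z" by (simp add: cinner_complex_def algebra_simps)
  show "cinner (scaleC c x) y = c * cinner x y" by (simp add: cinner_complex_def scaleC_complex_def)
  show "cinner y x = cnj (cinner x y)" by (simp add: cinner_complex_def)
  show "0 \<le> Re (cinner x x)" by (simp add: cinner_complex_def complex_mult_cnj)
  show "(cinner x x = 0) = (x = 0)" by (simp add: cinner_complex_def)
  show "norm x = sqrt (Re (cinner x x))"
    by (simp add: cinner_complex_def complex_mult_cnj cmod_def)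
qed
end

definition bop :: "('h::complex_inner \<Rightarrow> 'h) \<Rightarrow> bool" where
  "bop f \<longleftrightarrow> bounded_linear f \<and> (\<forall>c x. f (scaleC c x) = scaleC c (f x))"

definition adj :: "('h::complex_inner \<Rightarrow> 'h) \<Rightarrow> ('h \<Rightarrow> 'h)" where
  "adj f = (THE g. \<forall>x y. cinner (f x) y = cinner x (g y))"

definition superop_norm :: "(('h::complex_inner \<Rightarrow> 'h) \<Rightarrow> ('h \<Rightarrow> 'h)) \<Rightarrow> real" where
  "superop_norm T = Sup {onorm (T x) | x. bop x \<and> onorm x \<le> 1}"

definition elem_op :: "('l::finite \<Rightarrow> 'h \<Rightarrow> 'h) \<Rightarrow> ('l \<Rightarrow> 'h \<Rightarrow> 'h) \<Rightarrow> ('h \<Rightarrow> 'h) \<Rightarrow> ('h \<Rightarrow> 'h::complex_inner)" where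
  "elem_op a b x = (\<lambda>v. \<Sum>j\<in>UNIV. a j (x (b j v)))"

definition Qmat :: "('l::finite \<Rightarrow> 'h::complex_inner \<Rightarrow> 'h) \<Rightarrow> 'h \<Rightarrow> complex^'l^'l" where
  "Qmat c \<eta> = (\<chi> i j. cinner (c j \<eta>) (c i \<eta>))"

definition mat_adjoint :: "complex^'n^'n \<Rightarrow> complex^'n^'n" where
  "mat_adjoint X = (\<chi> i j. cnj (X $ j $ i))"

definition psd_mat :: "complex^'n^'n \<Rightarrow> bool" where
  "psd_mat X \<longleftrightarrow> mat_adjoint X = X \<and>
     (\<forall>v::complex^'n. 0 \<le> Re (\<Sum>i\<in>UNIV. \<Sum>j\<in>UNIV. cnj (v $ i) * X $ i $ j * v $ j))"

definition psd_sqrt :: "complex^'n^'n \<Rightarrow> complex^'n^'n" where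
  "psd_sqrt X = (THE R. psd_mat R \<and> R ** R = X)"

definition mat_trace :: "complex^'n^'n \<Rightarrow> complex" where
  "mat_trace X = (\<Sum>i\<in>UNIV. X $ i $ i)"

text \<open>tgm(X,Y) = trace sqrt(sqrt X * Y * sqrt X) (a real number for psd X, Y).\<close>
definition tgm :: "complex^'n^'n \<Rightarrow> complex^'n^'n \<Rightarrow> real" where
  "tgm X Y = Re (mat_trace (psd_sqrt (psd_sqrt X ** Y ** psd_sqrt X)))"

end

theory Submission
  imports Defs
begin


context complex_vector begin

lemma scaleC_zero_left [simp]: "scaleC 0 x = 0"
proof -
  have "scaleC 0 x = scaleC 0 x + scaleC 0 x" using scaleC_add_left[of 0 0 x] by simp
  then show ?thesis by simp
qed

lemma scaleC_zero_right [simp]: "scaleC c 0 = 0"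
proof -
  have "scaleC c 0 = scaleC c 0 + scaleC c 0" using scaleC_add_right[of c 0 0] by simp
  then show ?thesis by simp
qed

lemma scaleC_minus_left: "scaleC (- c) x = - scaleC c x"
  using scaleC_add_left[of c "-c" x] by (simp add: eq_neg_iff_add_eq_0 add.commute)

lemma scaleC_minus_right: "scaleC c (- x) = - scaleC c x"
  using scaleC_add_right[of c x "-x"] by (simp add: eq_neg_iff_add_eq_0 add.commute)

lemma scaleC_diff_left: "scaleC (c - d) x = scaleC c x - scaleC d x"
  using scaleC_add_left[of c "-d" x] by (simp add: scaleC_minus_left)

lemma scaleC_diff_right: "scaleC c (x - y) = scaleC c x - scaleC c y"
  using scaleC_add_right[of c x "-y"] by (simp add: scaleC_minus_right)

lemma scaleC_sum_right: "scaleC c (sum f A) = (\<Sum>i\<in>A. scaleC c (f i))"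
  by (induction A rule: infinite_finite_induct) (auto simp: scaleC_add_right)

lemma scaleC_sum_left: "scaleC (sum f A) x = (\<Sum>i\<in>A. scaleC (f i) x)"
  by (induction A rule: infinite_finite_induct) (auto simp: scaleC_add_left)

lemma scaleC_of_real: "scaleC (complex_of_real r) x = scaleR r x"
  by (simp add: scaleR_scaleC)

end

context complex_inner begin

lemma cinner_add_right: "cinner x (y + z) = cinner x y + cinner x z"
  by (metis cinner_add_left cinner_commute complex_cnj_add)

lemma cinner_scaleC_right: "cinner x (scaleC c y) = cnj c * cinner x y"
  by (metis cinner_scaleC_left cinner_commute complex_cnj_mult)

lemma cinner_zero_left [simp]: "cinner 0 x = 0"
  using cinner_scaleC_left[of 0 0 x] by simp

lemma cinner_zero_right [simp]: "cinner x 0 = 0"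
  using cinner_scaleC_right[of x 0 0] by simp

lemma cinner_minus_left: "cinner (- x) y = - cinner x y"
  using cinner_scaleC_left[of "-1" x y] by (simp add: scaleC_minus_left scaleC_one)

lemma cinner_minus_right: "cinner x (- y) = - cinner x y"
  using cinner_scaleC_right[of x "-1" y] by (simp add: scaleC_minus_left scaleC_one)

lemma cinner_diff_left: "cinner (x - y) z = cinner x z - cinner y z"
  using cinner_add_left[of x "-y" z] by (simp add: cinner_minus_left)

lemma cinner_diff_right: "cinner x (y - z) = cinner x y - cinner x z"
  using cinner_add_right[of x y "-z"] by (simp add: cinner_minus_right)

lemma cinner_sum_left: "cinner (sum f A) y = (\<Sum>i\<in>A. cinner (f i) y)"
  by (induction A rule: infinite_finite_induct) (auto simp: cinner_add_left)

lemma cinner_sum_right: "cinner x (sum f A) = (\<Sum>i\<in>A. cinner x (f i))"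
  by (induction A rule: infinite_finite_induct) (auto simp: cinner_add_right)

lemma cinner_scaleR_left: "cinner (scaleR r x) y = of_real r * cinner x y"
  by (simp add: scaleR_scaleC cinner_scaleC_left)

lemma cinner_scaleR_right: "cinner x (scaleR r y) = of_real r * cinner x y"
  by (simp add: scaleR_scaleC cinner_scaleC_right)

lemma cinner_self_real: "cinner x x = complex_of_real ((norm x)\<^sup>2)"
proof -
  have "Im (cinner x x) = 0" using cinner_commute[of x x]
    by (metis cnj.simps(2) complex.expand complex_cnj_cancel_iff minus_complex.sel(2) neg_equal_zero)
  moreover have "Re (cinner x x) = (norm x)\<^sup>2"
    using norm_eq_sqrt_cinner[of x] cinner_ge_zero[of x] by simp
  ultimately show ?thesis by (simp add: complex_eq_iff)
qed

lemma norm_sq_cinner: "(norm x)\<^sup>2 = Re (cinner x x)"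
  by (simp add: cinner_self_real)

lemma cinner_self_eq_norm: "cinner x x = of_real (norm x * norm x)"
  by (simp add: cinner_self_real power2_eq_square)

lemma norm_add_sq: "(norm (x + y))\<^sup>2 = (norm x)\<^sup>2 + (norm y)\<^sup>2 + 2 * Re (cinner x y)"
proof -
  have "cinner (x + y) (x + y) = cinner x x + cinner y y + (cinner x y + cnj (cinner x y))"
    by (simp add: cinner_add_left cinner_add_right cinner_commute[of y x] algebra_simps)
  then have "Re (cinner (x + y) (x + y)) = Re (cinner x x) + Re (cinner y y) + 2 * Re (cinner x y)"
    by simp
  then show ?thesis by (simp add: norm_sq_cinner)
qed

lemma norm_diff_sq: "(norm (x - y))\<^sup>2 = (norm x)\<^sup>2 + (norm y)\<^sup>2 - 2 * Re (cinner x y)"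
  using norm_add_sq[of x "-y"] by (simp add: cinner_minus_right)

lemma parallelogram: "(norm (x + y))\<^sup>2 + (norm (x - y))\<^sup>2 = 2 * (norm x)\<^sup>2 + 2 * (norm y)\<^sup>2"
  using norm_add_sq[of x y] norm_diff_sq[of x y] by simp

lemma norm_scaleC: "norm (scaleC c x) = cmod c * norm x"
proof -
  have "(norm (scaleC c x))\<^sup>2 = Re (c * cnj c * cinner x x)"
    by (simp add: norm_sq_cinner cinner_scaleC_left cinner_scaleC_right algebra_simps)
  also have "\<dots> = (cmod c * norm x)\<^sup>2"
    by (simp add: cinner_self_real complex_mult_cnj power_mult_distrib cmod_power2)
  finally show ?thesis by (rule power2_eq_imp_eq) auto
qed

lemma Cauchy_Schwarz: "cmod (cinner x y) \<le> norm x * norm y"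
proof (cases "y = 0")
  case True then show ?thesis by simp
next
  case False
  define N where "N = (norm y)\<^sup>2"
  have N: "N > 0" using False by (simp add: N_def)
  define z where "z = cinner x y"
  define c where "c = z / of_real N"
  have "cinner (x - scaleC c y) (x - scaleC c y) =
      cinner x x - cnj c * z - c * cnj z + c * cnj c * cinner y y"
    by (simp add: cinner_diff_left cinner_diff_right cinner_scaleC_left cinner_scaleC_right
        z_def cinner_commute[of y x] algebra_simps)
  also have "\<dots> = of_real ((norm x)\<^sup>2 - (cmod z)\<^sup>2 / N)"
  proof -
    have w: "cnj z * z = of_real ((cmod z)\<^sup>2)" by (metis complex_norm_square mult.commute)
    have e1: "cnj c * z = (cnj z * z) / of_real N" unfolding c_def by simp
    also have "\<dots> = of_real ((cmod z)\<^sup>2 / N)" by (simp only: w of_real_divide)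
    finally have e1: "cnj c * z = of_real ((cmod z)\<^sup>2 / N)" .
    have e2: "c * cnj z = (cnj z * z) / of_real N" unfolding c_def by simp
    also have "\<dots> = of_real ((cmod z)\<^sup>2 / N)" by (simp only: w of_real_divide)
    finally have e2: "c * cnj z = of_real ((cmod z)\<^sup>2 / N)" .
    have yy: "cinner y y = of_real N" by (simp add: cinner_self_real N_def)
    have e3: "c * cnj c * cinner y y = (cnj z * z) / of_real N"
      unfolding c_def yy using N by (simp add: field_simps)
    also have "\<dots> = of_real ((cmod z)\<^sup>2 / N)" by (simp only: w of_real_divide)
    finally have e3: "c * cnj c * cinner y y = of_real ((cmod z)\<^sup>2 / N)" .
    show ?thesis using e1 e2 e3 by (simp add: cinner_self_real)
  qed
  finally have "0 \<le> (norm x)\<^sup>2 - (cmod z)\<^sup>2 / N"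
    using cinner_ge_zero[of "x - scaleC c y"] by simp
  then have "(cmod z)\<^sup>2 / N \<le> (norm x)\<^sup>2" by simp
  then have "(cmod z)\<^sup>2 \<le> (norm x)\<^sup>2 * N" using N by (simp add: pos_divide_le_eq)
  then have "(cmod z)\<^sup>2 \<le> (norm x * norm y)\<^sup>2"
    by (simp only: N_def power_mult_distrib)
  then have "cmod z \<le> norm x * norm y" by (rule power2_le_imp_le) simp
  then show ?thesis unfolding z_def .
qed

lemma cinner_eq_zero_all: "(\<And>z. cinner z x = cinner z y) \<Longrightarrow> x = y"
proof -
  assume h: "\<And>z. cinner z x = cinner z y"
  have "cinner (x - y) (x - y) = 0" using h[of "x - y"] by (simp add: cinner_diff_right)
  then show "x = y" by (simp add: cinner_eq_zero_iff)
qed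

end



definition onfam :: "'i set \<Rightarrow> ('i \<Rightarrow> 'a::complex_inner) \<Rightarrow> bool" where
  "onfam K w \<longleftrightarrow> (\<forall>k\<in>K. \<forall>m\<in>K. cinner (w k) (w m) = (if k = m then 1 else 0))"

lemma onfam_cinner_sum:
  assumes "onfam K w" "finite K" "m \<in> K"
  shows "cinner (\<Sum>k\<in>K. scaleC (a k) (w k)) (w m) = a m"
proof -
  have "cinner (\<Sum>k\<in>K. scaleC (a k) (w k)) (w m) = (\<Sum>k\<in>K. if k = m then a k else 0)"
    using assms(1,3) unfolding onfam_def
    by (intro trans[OF cinner_sum_left] sum.cong) (auto simp: cinner_scaleC_left)
  also have "\<dots> = a m" using assms(2,3) by simp
  finally show ?thesis .
qed

lemma onfam_pythag:
  assumes "onfam K w" "finite K"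
  shows "(norm (\<Sum>k\<in>K. scaleC (a k) (w k)))\<^sup>2 = (\<Sum>k\<in>K. (cmod (a k))\<^sup>2)"
proof -
  let ?S = "\<Sum>k\<in>K. scaleC (a k) (w k)"
  have "cinner ?S ?S = (\<Sum>m\<in>K. cnj (a m) * cinner ?S (w m))"
    by (simp add: cinner_sum_right cinner_scaleC_right)
  also have "\<dots> = (\<Sum>m\<in>K. cnj (a m) * a m)"
    using onfam_cinner_sum[OF assms] by simp
  also have "\<dots> = (\<Sum>m\<in>K. complex_of_real ((cmod (a m))\<^sup>2))"
    by (intro sum.cong refl) (metis complex_norm_square mult.commute)
  finally have "cinner ?S ?S = of_real (\<Sum>m\<in>K. (cmod (a m))\<^sup>2)" by simp
  then show ?thesis by (simp add: norm_sq_cinner)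
qed

lemma onfam_bessel:
  assumes "onfam K w" "finite K"
  shows "(\<Sum>k\<in>K. (cmod (cinner h (w k)))\<^sup>2) \<le> (norm h)\<^sup>2"
proof -
  define p where "p = (\<Sum>k\<in>K. scaleC (cinner h (w k)) (w k))"
  define s where "s = (\<Sum>k\<in>K. (cmod (cinner h (w k)))\<^sup>2)"
  have pp: "(norm p)\<^sup>2 = s" unfolding p_def s_def by (rule onfam_pythag[OF assms])
  have "cinner h p = (\<Sum>k\<in>K. cnj (cinner h (w k)) * cinner h (w k))"
    unfolding p_def by (simp add: cinner_sum_right cinner_scaleC_right)
  also have "\<dots> = (\<Sum>k\<in>K. complex_of_real ((cmod (cinner h (w k)))\<^sup>2))"
    by (intro sum.cong refl) (metis complex_norm_square mult.commute)
  finally have hp: "Re (cinner h p) = s" unfolding s_def by simp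
  have "0 \<le> (norm (h - p))\<^sup>2" by simp
  also have "\<dots> = (norm h)\<^sup>2 - s" using norm_diff_sq[of h p] pp hp by simp
  finally show ?thesis unfolding s_def by simp
qed

lemma riesz:
  fixes f :: "'a::{complex_inner,complete_space} \<Rightarrow> complex"
  assumes add: "\<And>x y. f (x + y) = f x + f y"
    and sc: "\<And>c x. f (scaleC c x) = c * f x"
    and bnd: "\<And>x. cmod (f x) \<le> K * norm x"
  shows "\<exists>v. \<forall>x. f x = cinner x v"
proof (cases "\<forall>x. f x = 0")
  case True
  then show ?thesis by (intro exI[of _ 0]) simp
next
  case False
  then obtain x0 where x0: "f x0 \<noteq> 0" by blast
  have bl: "bounded_linear f"
  proof (rule bounded_linear_intro[of _ K])
    show "f (x + y) = f x + f y" for x y by (rule add)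
    show "f (scaleR r x) = scaleR r (f x)" for r x
      by (simp add: scaleR_scaleC sc scaleC_complex_def)
    show "norm (f x) \<le> norm x * K" for x using bnd[of x] by (simp add: mult.commute)
  qed
  have f0: "f 0 = 0" using sc[of 0 0] by simp
  define x1 where "x1 = scaleC (1 / f x0) x0"
  have fx1: "f x1 = 1" using x0 by (simp add: x1_def sc)
  define S where "S = norm ` {x. f x = 1}"
  define d where "d = Inf S"
  have Sne: "S \<noteq> {}" using fx1 by (auto simp: S_def)
  have bdd: "bdd_below S" unfolding S_def by (rule bdd_belowI[of _ 0]) auto
  have low: "d \<le> norm x" if "f x = 1" for x
    unfolding d_def using bdd that by (intro cInf_lower) (auto simp: S_def)
  have d0: "0 \<le> d" using low[OF fx1] norm_ge_zero[of x1]
    unfolding d_def using Sne by (intro cInf_greatest) (auto simp: S_def)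
  have "\<exists>h. f h = 1 \<and> norm h < d + inverse (real (Suc n))" for n
  proof -
    have "Inf S < d + inverse (real (Suc n))" unfolding d_def by simp
    from cInf_lessD[OF Sne this] show ?thesis by (auto simp: S_def)
  qed
  then obtain h where h1: "\<And>n. f (h n) = 1" and h2: "\<And>n. norm (h n) < d + inverse (real (Suc n))"
    by metis
  define e where "e n = inverse (real (Suc n))" for n
  have e0: "0 < e n" "e n \<le> 1" for n by (auto simp: e_def field_simps)
  have hsq: "(norm (h n - h m))\<^sup>2 \<le> (4 * d + 2) * (e n + e m)" for n m
  proof -
    have "f (scaleR (1/2) (h n + h m)) = 1"
      using bl h1 by (simp add: scaleR_scaleC sc add)
    then have "d \<le> norm (scaleR (1/2) (h n + h m))" by (rule low)
    then have "2 * d \<le> norm (h n + h m)" by simp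
    then have s1: "(2 * d)\<^sup>2 \<le> (norm (h n + h m))\<^sup>2" using d0 by (intro power_mono) auto
    have a1: "norm (h n) \<le> d + e n" "norm (h m) \<le> d + e m" using h2 unfolding e_def
      by (auto intro: less_imp_le)
    have s2: "(norm (h n))\<^sup>2 \<le> (d + e n)\<^sup>2" "(norm (h m))\<^sup>2 \<le> (d + e m)\<^sup>2"
      using a1 by (auto intro: power_mono)
    have "(norm (h n - h m))\<^sup>2 = 2 * (norm (h n))\<^sup>2 + 2 * (norm (h m))\<^sup>2 - (norm (h n + h m))\<^sup>2"
      using parallelogram[of "h n" "h m"] by simp
    also have "\<dots> \<le> 2 * (d + e n)\<^sup>2 + 2 * (d + e m)\<^sup>2 - (2 * d)\<^sup>2"
      using s1 s2 by simp
    also have "\<dots> = (4 * d) * (e n + e m) + 2 * (e n * e n) + 2 * (e m * e m)"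
      by (simp add: power2_eq_square algebra_simps)
    also have "\<dots> \<le> (4 * d) * (e n + e m) + 2 * e n + 2 * e m"
      using e0[of n] e0[of m] d0 by (intro add_mono mult_left_mono) (auto simp: mult_le_cancel_left1)
    also have "\<dots> = (4 * d + 2) * (e n + e m)" by (simp add: algebra_simps)
    finally show ?thesis .
  qed
  have "Cauchy h"
  proof (rule metric_CauchyI)
    fix eps :: real assume eps: "0 < eps"
    obtain N :: nat where N: "2 * (4 * d + 2) / eps\<^sup>2 < real N" using reals_Archimedean2 by blast
    have "dist (h m) (h n) < eps" if "m \<ge> N" "n \<ge> N" for m n
    proof -
      have em: "e m \<le> inverse (real (Suc N))" "e n \<le> inverse (real (Suc N))"
        using that unfolding e_def by (auto intro!: le_imp_inverse_le)
      have "(norm (h m - h n))\<^sup>2 \<le> (4 * d + 2) * (e m + e n)" by (rule hsq)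
      also have "\<dots> \<le> (4 * d + 2) * (2 * inverse (real (Suc N)))"
        using em d0 by (intro mult_left_mono) auto
      also have "\<dots> < eps\<^sup>2"
      proof -
        have a: "2 * (4 * d + 2) < real N * eps\<^sup>2"
          using N eps by (simp add: divide_less_eq)
        have b: "real N * eps\<^sup>2 \<le> eps\<^sup>2 * real (Suc N)" by (simp add: algebra_simps)
        have "2 * (4 * d + 2) < eps\<^sup>2 * real (Suc N)" using a b by linarith
        then show ?thesis by (simp add: field_simps)
      qed
      finally have "(norm (h m - h n))\<^sup>2 < eps\<^sup>2" .
      then have "norm (h m - h n) < eps" using eps by (simp add: power_less_imp_less_base)
      then show ?thesis by (simp add: dist_norm)
    qed
    then show "\<exists>M. \<forall>m\<ge>M. \<forall>n\<ge>M. dist (h m) (h n) < eps" by blast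
  qed
  then obtain z where hz: "h \<longlonglongrightarrow> z" using Cauchy_convergent convergent_def by blast
  have "(\<lambda>n. f (h n)) \<longlonglongrightarrow> f z" by (rule bounded_linear.tendsto[OF bl hz])
  then have fz: "f z = 1" using h1 LIMSEQ_unique[of "\<lambda>n. 1" 1 "f z"] by simp
  have zd: "norm z \<le> d"
  proof (rule tendsto_le[OF _ _ tendsto_norm[OF hz]])
    show "sequentially \<noteq> bot" by simp
    have "(\<lambda>n. d + inverse (real (Suc n))) \<longlonglongrightarrow> d + 0"
      by (intro tendsto_add tendsto_const LIMSEQ_inverse_real_of_nat)
    then show "(\<lambda>n. d + inverse (real (Suc n))) \<longlonglongrightarrow> d" by simp
    show "\<forall>\<^sub>F n in sequentially. norm (h n) \<le> d + inverse (real (Suc n))"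
      using h2 by (intro always_eventually allI less_imp_le) 
  qed
  have zmin: "norm z \<le> norm x" if "f x = 1" for x using zd low[OF that] by simp
  have orth: "cinner z w = 0" if w: "f w = 0" for w
  proof (rule ccontr)
    assume c0: "cinner z w \<noteq> 0"
    define c where "c = cinner z w"
    then have wne: "w \<noteq> 0" using c0 by auto
    define N where "N = (norm w)\<^sup>2"
    have N: "N > 0" using wne by (simp add: N_def)
    define t where "t = - (c / of_real N)"
    have "f (z + scaleC t w) = 1" using fz w by (simp add: add sc)
    then have "(norm z)\<^sup>2 \<le> (norm (z + scaleC t w))\<^sup>2"
      using zmin by (intro power_mono) auto
    also have "\<dots> = (norm z)\<^sup>2 + (cmod t * norm w)\<^sup>2 + 2 * Re (cnj t * c)"
      by (simp add: norm_add_sq norm_scaleC cinner_scaleC_right c_def)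
    also have "(cmod t * norm w)\<^sup>2 = (cmod c)\<^sup>2 / N"
    proof -
      have ct: "cmod t = cmod c / N" using N by (simp add: t_def norm_divide)
      have "(cmod t * norm w)\<^sup>2 = (cmod t)\<^sup>2 * (norm w)\<^sup>2" by (rule power_mult_distrib)
      also have "\<dots> = (cmod c / N)\<^sup>2 * N" by (simp only: ct N_def)
      also have "\<dots> = (cmod c)\<^sup>2 / N" using N by (simp add: power2_eq_square field_simps)
      finally show ?thesis .
    qed
    also have "cnj t * c = - (cnj c * c) / of_real N" by (simp add: t_def)
    also have "cnj c * c = of_real ((cmod c)\<^sup>2)" by (metis complex_norm_square mult.commute)
    finally have "(norm z)\<^sup>2 \<le> (norm z)\<^sup>2 + (cmod c)\<^sup>2 / N - 2 * ((cmod c)\<^sup>2 / N)"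
      by simp
    then have "(cmod c)\<^sup>2 / N \<le> 0" by simp
    then have "(cmod c)\<^sup>2 \<le> 0" using N by (simp add: divide_le_0_iff)
    then have "c = 0" by simp
    then show False using c0 c_def by simp
  qed
  have z0: "z \<noteq> 0" using fz f0 by auto
  define v where "v = scaleC (of_real (inverse ((norm z)\<^sup>2))) z"
  have "f x = cinner x v" for x
  proof -
    have fd: "f (p - q) = f p - f q" for p q
      using add[of "p - q" q] by simp
    have "f (x - scaleC (f x) z) = 0" using fz by (simp add: fd sc)
    then have "cinner (x - scaleC (f x) z) z = 0"
      using orth[of "x - scaleC (f x) z"] cinner_commute[of "x - scaleC (f x) z" z] by simp
    then have "cinner x z = f x * of_real ((norm z)\<^sup>2)"
      by (simp add: cinner_diff_left cinner_scaleC_left cinner_self_real)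
    then show ?thesis using z0 by (simp add: v_def cinner_scaleC_right)
  qed
  then show ?thesis by blast
qed

lemma bop_bl: "bop a \<Longrightarrow> bounded_linear a" by (simp add: bop_def)
lemma bop_scaleC: "bop a \<Longrightarrow> a (scaleC c x) = scaleC c (a x)" by (simp add: bop_def)
lemma bop_add: "bop a \<Longrightarrow> a (x + y) = a x + a y"
proof -
  assume "bop a"
  then interpret bounded_linear a by (rule bop_bl)
  show ?thesis by (rule add)
qed
lemma bop_bound: "bop a \<Longrightarrow> norm (a x) \<le> onorm a * norm x"
  using bop_bl onorm by blast

lemma adj_exists:
  fixes a :: "'h::{complex_inner,complete_space} \<Rightarrow> 'h"
  assumes "bop a"
  shows "\<exists>g. \<forall>x y. cinner (a x) y = cinner x (g y)"
proof -
  have "\<exists>v. \<forall>x. cinner (a x) y = cinner x v" for y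
  proof (rule riesz[where K = "onorm a * norm y"])
    show "cinner (a (x + z)) y = cinner (a x) y + cinner (a z) y" for x z
      using assms by (simp add: bop_add cinner_add_left)
    show "cinner (a (scaleC c x)) y = c * cinner (a x) y" for c x
      using assms by (simp add: bop_scaleC cinner_scaleC_left)
    show "cmod (cinner (a x) y) \<le> onorm a * norm y * norm x" for x
    proof -
      have "cmod (cinner (a x) y) \<le> norm (a x) * norm y" by (rule Cauchy_Schwarz)
      also have "\<dots> \<le> onorm a * norm x * norm y"
        using bop_bound[OF assms] by (intro mult_right_mono) auto
      finally show ?thesis by (simp add: algebra_simps)
    qed
  qed
  then have "\<forall>y. \<exists>v. \<forall>x. cinner (a x) y = cinner x v" by blast
  from choice[OF this] show ?thesis by blast
qed

lemma adj_eq: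
  fixes a :: "'h::{complex_inner,complete_space} \<Rightarrow> 'h"
  assumes "bop a"
  shows "cinner (a x) y = cinner x (adj a y)"
proof -
  obtain g where g: "\<forall>x y. cinner (a x) y = cinner x (g y)" using adj_exists[OF assms] by blast
  have "\<exists>!g. \<forall>x y. cinner (a x) y = cinner x (g y)"
  proof (rule ex1I[of _ g])
    show "\<forall>x y. cinner (a x) y = cinner x (g y)" by (rule g)
    fix g' assume g': "\<forall>x y. cinner (a x) y = cinner x (g' y)"
    show "g' = g"
    proof
      fix y
      have "cinner z (g' y) = cinner z (g y)" for z
      proof -
        have "cinner z (g' y) = cinner (a z) y" using g' by simp
        also have "\<dots> = cinner z (g y)" using g by simp
        finally show ?thesis .
      qed
      then show "g' y = g y" by (rule cinner_eq_zero_all)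
    qed
  qed
  then have "\<forall>x y. cinner (a x) y = cinner x (adj a y)" unfolding adj_def by (rule theI')
  then show ?thesis by blast
qed



instantiation vec :: (complex_vector, finite) complex_vector
begin
definition scaleC_vec_def: "scaleC c x = (\<chi> i. scaleC c (x $ i))"
instance
proof
  fix c d :: complex and x y :: "'a ^ 'b" and r :: real
  show "scaleC c (x + y) = scaleC c x + scaleC c y"
    by (simp add: scaleC_vec_def vec_eq_iff scaleC_add_right)
  show "scaleC (c + d) x = scaleC c x + scaleC d x"
    by (simp add: scaleC_vec_def vec_eq_iff scaleC_add_left)
  show "scaleC c (scaleC d x) = scaleC (c * d) x"
    by (simp add: scaleC_vec_def vec_eq_iff scaleC_scaleC)
  show "scaleC 1 x = x"
    by (simp add: scaleC_vec_def vec_eq_iff scaleC_one)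
  show "scaleR r x = scaleC (complex_of_real r) x"
    by (simp add: scaleC_vec_def vec_eq_iff scaleR_scaleC)
qed
end

lemma scaleC_vec_nth [simp]: "(scaleC c x) $ i = scaleC c (x $ i)"
  by (simp add: scaleC_vec_def)

instantiation vec :: (complex_inner, finite) complex_inner
begin
definition cinner_vec_def: "cinner x y = (\<Sum>i\<in>UNIV. cinner (x $ i) (y $ i))"
instance
proof
  fix c :: complex and x y z :: "'a ^ 'b"
  show "cinner (x + y) z = cinner x z + cinner y z"
    by (simp add: cinner_vec_def cinner_add_left sum.distrib)
  show "cinner (scaleC c x) y = c * cinner x y"
    by (simp add: cinner_vec_def cinner_scaleC_left sum_distrib_left)
  show "cinner y x = cnj (cinner x y)"
    by (simp add: cinner_vec_def cnj_sum cinner_commute[of "y $ i" "x $ i" for i])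
  have xx: "cinner x x = complex_of_real (\<Sum>i\<in>UNIV. (norm (x $ i))\<^sup>2)"
    by (simp add: cinner_vec_def cinner_self_real)
  show "0 \<le> Re (cinner x x)" unfolding xx by (simp add: sum_nonneg)
  show "(cinner x x = 0) = (x = 0)"
  proof
    assume "cinner x x = 0"
    then have "(\<Sum>i\<in>UNIV. (norm (x $ i))\<^sup>2) = 0" by (metis xx of_real_eq_0_iff)
    then have "\<forall>i\<in>UNIV. (norm (x $ i))\<^sup>2 = 0"
      by (subst sum_nonneg_eq_0_iff[symmetric]) auto
    then show "x = 0" by (simp add: vec_eq_iff)
  next
    assume "x = 0" then show "cinner x x = 0" by (simp add: cinner_vec_def)
  qed
  show "norm x = sqrt (Re (cinner x x))"
    unfolding xx by (simp add: norm_vec_def L2_set_def)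
qed
end

lemma cinner_cvec: "cinner (x :: complex ^ 'n) y = (\<Sum>i\<in>UNIV. x $ i * cnj (y $ i))"
  by (simp add: cinner_vec_def cinner_complex_def)

lemma scaleC_cvec_nth [simp]: "(scaleC c (x :: complex ^ 'n)) $ i = c * x $ i"
  by (simp add: scaleC_complex_def)

lemma inner_cvec: "inner (x :: complex ^ 'n) y = Re (cinner x y)"
  by (simp add: inner_vec_def cinner_cvec inner_complex_def Re_sum)

lemma mv_cinner_adj:
  fixes A :: "complex ^ 'n ^ 'n"
  shows "cinner (A *v x) y = cinner x (mat_adjoint A *v y)"
proof -
  have "cinner (A *v x) y = (\<Sum>i\<in>UNIV. \<Sum>j\<in>UNIV. A $ i $ j * x $ j * cnj (y $ i))"
    by (simp add: cinner_cvec matrix_vector_mult_def sum_distrib_right)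
  also have "\<dots> = (\<Sum>j\<in>UNIV. \<Sum>i\<in>UNIV. A $ i $ j * x $ j * cnj (y $ i))"
    by (rule sum.swap)
  also have "\<dots> = cinner x (mat_adjoint A *v y)"
    by (simp add: cinner_cvec matrix_vector_mult_def mat_adjoint_def cnj_sum sum_distrib_left
        algebra_simps)
  finally show ?thesis .
qed

lemma herm_cinner:
  fixes A :: "complex ^ 'n ^ 'n"
  assumes "mat_adjoint A = A"
  shows "cinner (A *v x) y = cinner x (A *v y)"
  using mv_cinner_adj[of A x y] assms by simp

lemma herm_real:
  fixes A :: "complex ^ 'n ^ 'n"
  assumes "mat_adjoint A = A"
  shows "cinner (A *v x) x = complex_of_real (Re (cinner (A *v x) x))"
proof -
  have "cinner (A *v x) x = cnj (cinner (A *v x) x)"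
    using herm_cinner[OF assms, of x x] cinner_commute[of x "A *v x"] by simp
  then have "Im (cinner (A *v x) x) = 0"
    by (metis cnj.simps(2) complex_cnj_cancel_iff neg_equal_zero)
  then show ?thesis by (simp add: complex_eq_iff)
qed

lemma psd_mat_iff:
  fixes X :: "complex ^ 'n ^ 'n"
  shows "psd_mat X \<longleftrightarrow> mat_adjoint X = X \<and> (\<forall>v. 0 \<le> Re (cinner (X *v v) v))"
proof -
  have "(\<Sum>i\<in>UNIV. \<Sum>j\<in>UNIV. cnj (v $ i) * X $ i $ j * v $ j) = cinner (X *v v) v" for v
    by (simp add: cinner_cvec matrix_vector_mult_def sum_distrib_right sum_distrib_left
        algebra_simps)
  then show ?thesis unfolding psd_mat_def by simp
qed

lemma mv_add: "(A :: complex ^ 'n ^ 'm) *v (x + y) = A *v x + A *v y"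
  by (rule matrix_vector_right_distrib)

lemma mv_diff: "(A :: complex ^ 'n ^ 'm) *v (x - y) = A *v x - A *v y"
  by (simp add: matrix_vector_mult_diff_distrib)

lemma mv_scaleC: "(A :: complex ^ 'n ^ 'm) *v (scaleC c x) = scaleC c (A *v x)"
  by (simp add: matrix_vector_mult_def vec_eq_iff sum_distrib_left algebra_simps scaleC_complex_def)

lemma mv_sum: "(A :: complex ^ 'n ^ 'm) *v (\<Sum>k\<in>K. f k) = (\<Sum>k\<in>K. A *v f k)"
  by (induction K rule: infinite_finite_induct) (auto simp: mv_add)

lemma mv_zero: "(A :: complex ^ 'n ^ 'm) *v 0 = 0"
  by (simp add: matrix_vector_mult_def vec_eq_iff)



definition onb :: "('a::complex_inner) set \<Rightarrow> bool" where
  "onb B \<longleftrightarrow> finite B \<and> onfam B id \<and> (\<forall>x. x = (\<Sum>u\<in>B. scaleC (cinner x u) u))"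

lemma onfam_id: "onfam B id \<Longrightarrow> u \<in> B \<Longrightarrow> v \<in> B \<Longrightarrow> cinner u v = (if u = v then 1 else 0)"
  unfolding onfam_def by auto

lemma onfam_sum_id:
  assumes "onfam B id" "finite B" "m \<in> B"
  shows "cinner (\<Sum>k\<in>B. scaleC (a k) k) m = a m"
  using onfam_cinner_sum[OF assms, of a] by simp

lemma norm_one_cinner: "norm x = 1 \<Longrightarrow> cinner x x = 1"
  by (simp add: cinner_self_real)

lemma iB_facts:
  fixes B :: "(complex ^ 'n) set"
  assumes on: "onfam B id"
  defines "S \<equiv> B \<union> (\<lambda>u. scaleC \<i> u) ` B"
  shows "pairwise orthogonal S" "0 \<notin> S" "B \<inter> (\<lambda>u. scaleC \<i> u) ` B = {}"
    "inj_on (\<lambda>u. scaleC \<i> u) B"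
proof -
  have cu: "cinner u v = (if u = v then 1 else 0)" if "u \<in> B" "v \<in> B" for u v
    using onfam_id[OF on that] .
  show "pairwise orthogonal S"
    unfolding pairwise_def orthogonal_def S_def inner_cvec
    by (auto simp: cu cinner_scaleC_left cinner_scaleC_right)
  show "0 \<notin> S"
  proof
    assume "0 \<in> S"
    then obtain u where u: "u \<in> B" "u = 0 \<or> scaleC \<i> u = 0" unfolding S_def by auto
    have "scaleC (- \<i>) (scaleC \<i> u) = u" by (simp add: scaleC_scaleC scaleC_one)
    then have "u = 0" using u(2) by auto
    then show False using cu[OF u(1) u(1)] by simp
  qed
  show "B \<inter> (\<lambda>u. scaleC \<i> u) ` B = {}"
  proof (rule ccontr)
    assume "B \<inter> (\<lambda>u. scaleC \<i> u) ` B \<noteq> {}"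
    then obtain v where v: "v \<in> B" "scaleC \<i> v \<in> B" by auto
    have "cinner (scaleC \<i> v) v = \<i>" using cu[OF v(1) v(1)] by (simp add: cinner_scaleC_left)
    moreover have "cinner (scaleC \<i> v) v = (if scaleC \<i> v = v then 1 else 0)" using cu[OF v(2) v(1)] .
    ultimately show False by (auto split: if_splits)
  qed
  show "inj_on (\<lambda>u. scaleC \<i> u) B"
  proof (rule inj_onI)
    fix x y assume "scaleC \<i> x = scaleC \<i> (y :: complex ^ 'n)"
    then have "scaleC (- \<i>) (scaleC \<i> x) = scaleC (- \<i>) (scaleC \<i> y)" by simp
    then show "x = y" by (simp add: scaleC_scaleC scaleC_one)
  qed
qed

lemma card_onfam_le:
  fixes B :: "(complex ^ 'n) set"
  assumes fin: "finite B" and on: "onfam B id"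
  shows "card B \<le> CARD('n)"
proof -
  define S where "S = B \<union> (\<lambda>u. scaleC \<i> u) ` B"
  note f = iB_facts[OF on, folded S_def]
  have "independent S" by (rule pairwise_orthogonal_independent[OF f(1,2)])
  then have "card S \<le> DIM(complex ^ 'n)" using independent_bound by blast
  moreover have "card S = 2 * card B"
    unfolding S_def using f(3,4) fin by (simp add: card_Un_disjoint card_image)
  ultimately show ?thesis by simp
qed

lemma exists_orth_unit:
  fixes B :: "(complex ^ 'n) set"
  assumes fin: "finite B" and on: "onfam B id" and lt: "card B < CARD('n)"
  shows "\<exists>c. norm c = 1 \<and> (\<forall>u\<in>B. cinner c u = 0)"
proof -
  define S where "S = B \<union> (\<lambda>u. scaleC \<i> u) ` B"
  have finS: "finite S" using fin by (simp add: S_def)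
  have "card S \<le> card B + card ((\<lambda>u. scaleC \<i> u) ` B)" unfolding S_def by (rule card_Un_le)
  also have "\<dots> \<le> 2 * card B" using card_image_le[OF fin, of "\<lambda>u. scaleC \<i> u"] by simp
  finally have "card S \<le> 2 * card B" .
  moreover have "dim S \<le> card S" by (rule dim_le_card[OF span_superset finS])
  ultimately have "dim S < DIM(complex ^ 'n)" using lt by simp
  then obtain x where x: "x \<noteq> 0" "\<And>y. y \<in> span S \<Longrightarrow> orthogonal x y"
    using orthogonal_to_subspace_exists by blast
  have "cinner x u = 0" if "u \<in> B" for u
  proof -
    have "orthogonal x u" "orthogonal x (scaleC \<i> u)"
      using x(2) that by (auto simp: S_def intro: span_base)
    then have "Re (cinner x u) = 0" "Re (cnj \<i> * cinner x u) = 0"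
      by (auto simp: orthogonal_def inner_cvec cinner_scaleC_right)
    then show ?thesis by (simp add: complex_eq_iff)
  qed
  then show ?thesis using x(1)
    by (intro exI[of _ "scaleC (of_real (1 / norm x)) x"])
       (auto simp: norm_scaleC cinner_scaleC_left norm_divide)
qed

lemma onfam_insert:
  assumes on: "onfam B id" and cu: "\<And>u. u \<in> B \<Longrightarrow> cinner c u = 0" and cc: "cinner c c = 1"
  shows "onfam (insert c B) id"
  unfolding onfam_def
proof (intro ballI)
  fix k m assume k: "k \<in> insert c B" and m: "m \<in> insert c B"
  have cB: "c \<notin> B" using cu cc by force
  show "cinner (id k) (id m) = (if k = m then 1 else 0)"
  proof (cases "k = c")
    case True
    then show ?thesis using m cu cc cB by auto
  next
    case False
    then have kB: "k \<in> B" using k by simp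
    show ?thesis
    proof (cases "m = c")
      case True
      then show ?thesis using kB cB cu[OF kB] cinner_commute[of k c] by auto
    next
      case False
      then show ?thesis using kB m onfam_id[OF on kB] by simp
    qed
  qed
qed

lemma cont_cinner_left: "continuous_on S (\<lambda>c::complex^'n. cinner c u)"
  unfolding cinner_cvec by (intro continuous_intros continuous_on_component continuous_on_id)

lemma cont_quad: "continuous_on S (\<lambda>c::complex^'n. Re (cinner (A *v c) c))"
proof -
  have e: "(\<lambda>c::complex^'n. Re (cinner (A *v c) c)) =
      (\<lambda>c. Re (\<Sum>i\<in>UNIV. (\<Sum>j\<in>UNIV. A $ i $ j * c $ j) * cnj (c $ i)))"
    by (simp add: cinner_cvec matrix_vector_mult_def)
  show ?thesis unfolding e
    by (intro continuous_intros continuous_on_component continuous_on_id)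
qed

lemma eigen_step:
  fixes A :: "complex ^ 'n ^ 'n"
  assumes herm: "mat_adjoint A = A"
    and fin: "finite B" and on: "onfam B id"
    and eig: "\<forall>u\<in>B. A *v u = scaleC (of_real (lam u)) u"
    and lt: "card B < CARD('n)"
  shows "\<exists>c \<mu>. c \<notin> B \<and> onfam (insert c B) id \<and> A *v c = scaleC (of_real \<mu>) c"
proof -
  define K where "K = {c::complex^'n. norm c = 1} \<inter> (\<Inter>u\<in>B. {c. cinner c u = 0})"
  define q where "q c = Re (cinner (A *v c) c)" for c
  have Kne: "K \<noteq> {}" using exists_orth_unit[OF fin on lt] by (auto simp: K_def)
  have "closed K" unfolding K_def
  proof (intro closed_Int closed_INT ballI)
    show "closed {c::complex^'n. norm c = 1}"
      by (rule closed_Collect_eq) (auto intro: continuous_intros)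
    show "closed {c::complex^'n. cinner c u = 0}" for u
      by (rule closed_Collect_eq) (auto intro: cont_cinner_left continuous_intros)
  qed
  moreover have "bounded K" by (rule bounded_subset[of "cball 0 1"]) (auto simp: K_def)
  ultimately have "compact K" by (simp add: compact_eq_bounded_closed)
  then obtain c where cK: "c \<in> K" and cmax: "\<And>y. y \<in> K \<Longrightarrow> q y \<le> q c"
    using continuous_attains_sup[OF _ Kne, of q] cont_quad unfolding q_def by blast
  have nc: "norm c = 1" and cu: "\<And>u. u \<in> B \<Longrightarrow> cinner c u = 0" using cK by (auto simp: K_def)
  have cc: "cinner c c = 1" using nc by (rule norm_one_cinner)
  define lm where "lm = q c"
  have Acc: "cinner (A *v c) c = of_real lm" unfolding lm_def q_def by (rule herm_real[OF herm])
  define r where "r = A *v c - scaleC (of_real lm) c"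
  have Ac: "A *v c = r + scaleC (of_real lm) c" by (simp add: r_def)
  have ru: "cinner r u = 0" if "u \<in> B" for u
  proof -
    have "cinner (A *v c) u = cinner c (A *v u)" by (rule herm_cinner[OF herm])
    also have "\<dots> = 0" using eig that cu[OF that] by (simp add: cinner_scaleC_right)
    finally show ?thesis using cu[OF that] by (simp add: r_def cinner_diff_left cinner_scaleC_left)
  qed
  have rc: "cinner r c = 0" by (simp add: r_def cinner_diff_left cinner_scaleC_left Acc cc)
  have cr: "cinner c r = 0" using rc cinner_commute[of c r] by simp
  define R where "R = (norm r)\<^sup>2"
  have Acr: "cinner (A *v c) r = of_real R"
    by (simp add: Ac cinner_add_left cinner_scaleC_left cr R_def cinner_self_real)
  have Arc: "cinner (A *v r) c = of_real R"
  proof -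
    have "cinner (A *v r) c = cinner r (A *v c)" by (rule herm_cinner[OF herm])
    also have "\<dots> = cnj (cinner (A *v c) r)" by (rule cinner_commute)
    finally show ?thesis using Acr by simp
  qed
  have r0: "r = 0"
  proof (rule ccontr)
    assume rne: "r \<noteq> 0"
    then have R: "R > 0" by (simp add: R_def)
    define D where "D = lm * R - q r"
    define t where "t = R / (\<bar>D\<bar> + 1)"
    have t: "t > 0" using R by (simp add: t_def add_pos_nonneg)
    define y where "y = c + scaleC (of_real t) r"
    have yu: "cinner y u = 0" if "u \<in> B" for u
      using that cu ru by (simp add: y_def cinner_add_left cinner_scaleC_left)
    have ny: "(norm y)\<^sup>2 = 1 + t\<^sup>2 * R"
      using nc by (simp add: y_def norm_add_sq norm_scaleC cinner_scaleC_right cr R_def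
          power_mult_distrib)
    have "0 < 1 + t\<^sup>2 * R" using R by (simp add: add_pos_nonneg)
    then have ny0: "(norm y)\<^sup>2 > 0" using ny by simp
    have "y \<noteq> 0"
    proof
      assume "y = 0" then show False using ny0 by simp
    qed
    then have ypos: "norm y > 0" by simp
    define y' where "y' = scaleC (of_real (1 / norm y)) y"
    have "y' \<in> K" using ypos yu
      by (auto simp: K_def y'_def norm_scaleC cinner_scaleC_left norm_divide)
    then have "q y' \<le> lm" using cmax unfolding lm_def by blast
    moreover have "q y' = q y / (norm y)\<^sup>2"
    proof -
      have "cinner (A *v y') y' = of_real (1 / norm y) * of_real (1 / norm y) * cinner (A *v y) y"
        by (simp add: y'_def mv_scaleC cinner_scaleC_left cinner_scaleC_right)
      then have "q y' = (1 / norm y) * (1 / norm y) * q y" by (simp add: q_def)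
      then show ?thesis by (simp add: power2_eq_square)
    qed
    ultimately have "q y \<le> lm * (norm y)\<^sup>2" using ypos by (simp add: divide_le_eq)
    moreover have "q y = lm + 2 * t * R + t\<^sup>2 * q r"
    proof -
      have "cinner (A *v y) y = cinner (A *v c) c + of_real t * cinner (A *v c) r
          + of_real t * cinner (A *v r) c + of_real t * of_real t * cinner (A *v r) r"
        by (simp add: y_def mv_add mv_scaleC cinner_add_left cinner_add_right
            cinner_scaleC_left cinner_scaleC_right algebra_simps)
      then show ?thesis
        by (simp add: q_def Acc Acr Arc power2_eq_square)
    qed
    ultimately have "lm + 2 * t * R + t\<^sup>2 * q r \<le> lm * (1 + t\<^sup>2 * R)" using ny by simp
    then have "t * (2 * R) \<le> t * (t * D)" by (simp add: D_def power2_eq_square algebra_simps)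
    then have "2 * R \<le> t * D" using t by simp
    also have "\<dots> \<le> t * \<bar>D\<bar>" using t by (intro mult_left_mono) auto
    also have "\<dots> < R"
    proof -
      have "t * (\<bar>D\<bar> + 1) = R" unfolding t_def by simp
      then show ?thesis using t by (simp add: algebra_simps)
    qed
    finally show False using R by simp
  qed
  have cB: "c \<notin> B" using cu cc by force
  have "onfam (insert c B) id" by (rule onfam_insert[OF on cu cc])
  moreover have "A *v c = scaleC (of_real lm) c" using Ac r0 by simp
  ultimately show ?thesis using cB by blast
qed

lemma spectral_aux:
  fixes A :: "complex ^ 'n ^ 'n"
  assumes herm: "mat_adjoint A = A"
  shows "k \<le> CARD('n) \<Longrightarrow> \<exists>B lam. finite B \<and> card B = k \<and> onfam B id \<and>
      (\<forall>u\<in>B. A *v u = scaleC (of_real (lam u)) u)"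
proof (induction k)
  case 0
  show ?case by (intro exI[of _ "{}"]) (auto simp: onfam_def)
next
  case (Suc k)
  have "k \<le> CARD('n)" using Suc.prems by simp
  then obtain B lam where B: "finite B" "card B = k" "onfam B id"
      "\<forall>u\<in>B. A *v u = scaleC (of_real (lam u)) u" using Suc.IH by blast
  obtain c \<mu> where c: "c \<notin> B" "onfam (insert c B) id" "A *v c = scaleC (of_real \<mu>) c"
    using eigen_step[OF herm B(1,3,4)] B(2) Suc(2) by auto
  have "finite (insert c B)" "card (insert c B) = Suc k" using B c by auto
  moreover have "\<forall>u\<in>insert c B. A *v u = scaleC (of_real ((lam(c := \<mu>)) u)) u"
    using B c by auto
  ultimately show ?case using c(2) by blast
qed

lemma spectral:
  fixes A :: "complex ^ 'n ^ 'n"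
  assumes herm: "mat_adjoint A = A"
  shows "\<exists>B lam. onb B \<and> (\<forall>u\<in>B. A *v u = scaleC (of_real (lam u)) u)"
proof -
  obtain B lam where B: "finite B" "card B = CARD('n)" "onfam B id"
      "\<forall>u\<in>B. A *v u = scaleC (of_real (lam u)) u"
    using spectral_aux[OF herm, of "CARD('n)"] by auto
  have "x = (\<Sum>u\<in>B. scaleC (cinner x u) u)" for x
  proof (rule ccontr)
    assume ne: "x \<noteq> (\<Sum>u\<in>B. scaleC (cinner x u) u)"
    define r where "r = x - (\<Sum>u\<in>B. scaleC (cinner x u) u)"
    have r0: "r \<noteq> 0" using ne by (simp add: r_def)
    have ru: "cinner r u = 0" if "u \<in> B" for u
      using onfam_sum_id[OF B(3,1) that, of "\<lambda>u. cinner x u"] by (simp add: r_def cinner_diff_left)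
    define c where "c = scaleC (of_real (1 / norm r)) r"
    have nc: "norm c = 1" using r0 by (simp add: c_def norm_scaleC norm_divide)
    have cu: "cinner c u = 0" if "u \<in> B" for u using ru[OF that] by (simp add: c_def cinner_scaleC_left)
    have cB: "c \<notin> B" using cu norm_one_cinner[OF nc] by force
    have "onfam (insert c B) id" by (rule onfam_insert[OF B(3) cu norm_one_cinner[OF nc]])
    from card_onfam_le[OF _ this] have "card (insert c B) \<le> CARD('n)" using B(1) by simp
    then show False using cB B(1,2) by simp
  qed
  then show ?thesis using B unfolding onb_def by blast
qed



definition diagm :: "(complex ^ 'n) set \<Rightarrow> (complex ^ 'n \<Rightarrow> complex) \<Rightarrow> complex ^ 'n ^ 'n" where
  "diagm B f = (\<chi> i j. \<Sum>u\<in>B. f u * u $ i * cnj (u $ j))"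

lemma diagm_mv: "diagm B f *v x = (\<Sum>u\<in>B. scaleC (f u * cinner x u) u)"
proof (rule vec_eq_iff[THEN iffD2], rule allI)
  fix i
  have "(diagm B f *v x) $ i = (\<Sum>j\<in>UNIV. \<Sum>u\<in>B. f u * u $ i * cnj (u $ j) * x $ j)"
    by (simp add: diagm_def matrix_vector_mult_def sum_distrib_right)
  also have "\<dots> = (\<Sum>u\<in>B. \<Sum>j\<in>UNIV. f u * u $ i * cnj (u $ j) * x $ j)" by (rule sum.swap)
  also have "\<dots> = (\<Sum>u\<in>B. f u * (\<Sum>j\<in>UNIV. x $ j * cnj (u $ j)) * u $ i)"
    by (simp add: sum_distrib_left sum_distrib_right algebra_simps)
  also have "\<dots> = (\<Sum>u\<in>B. scaleC (f u * cinner x u) u) $ i"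
    by (simp add: cinner_cvec scaleC_complex_def)
  finally show "(diagm B f *v x) $ i = (\<Sum>u\<in>B. scaleC (f u * cinner x u) u) $ i" .
qed

lemma onb_expand: "onb B \<Longrightarrow> x = (\<Sum>u\<in>B. scaleC (cinner x u) u)"
  unfolding onb_def by blast

lemma onb_finite: "onb B \<Longrightarrow> finite B" unfolding onb_def by blast
lemma onb_onfam: "onb B \<Longrightarrow> onfam B id" unfolding onb_def by blast

lemma mv_onb_expand:
  fixes A :: "complex ^ 'n ^ 'n"
  assumes "onb B"
  shows "A *v x = (\<Sum>u\<in>B. scaleC (cinner x u) (A *v u))"
proof -
  have "A *v x = A *v (\<Sum>u\<in>B. scaleC (cinner x u) u)" using onb_expand[OF assms] by metis
  also have "\<dots> = (\<Sum>u\<in>B. scaleC (cinner x u) (A *v u))" by (simp add: mv_sum mv_scaleC)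
  finally show ?thesis .
qed

lemma sum_delta_onb:
  assumes on: "onfam B id" and fin: "finite B" and u: "u \<in> B"
  shows "(\<Sum>v\<in>B. scaleC (f v * cinner u v) v) = scaleC (f u) u"
proof -
  have "(\<Sum>v\<in>B. scaleC (f v * cinner u v) v) = (\<Sum>v\<in>B. if v = u then scaleC (f u) u else 0)"
    using onfam_id[OF on u] by (intro sum.cong refl) auto
  also have "\<dots> = scaleC (f u) u" using fin u by simp
  finally show ?thesis .
qed

lemma diagm_cong:
  assumes "\<And>u. u \<in> B \<Longrightarrow> f u = g u"
  shows "diagm B f = diagm B g"
  unfolding diagm_def by (intro arg_cong[where f = vec_lambda] ext sum.cong refl) (simp add: assms)

lemma diagm_eigen:
  assumes "onb B" "u \<in> B"
  shows "diagm B f *v u = scaleC (f u) u"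
  unfolding diagm_mv using sum_delta_onb[OF onb_onfam[OF assms(1)] onb_finite[OF assms(1)] assms(2)] .

lemma spectral_diagm:
  fixes A :: "complex ^ 'n ^ 'n"
  assumes B: "onb B" and eig: "\<forall>u\<in>B. A *v u = scaleC (f u) u"
  shows "A = diagm B f"
proof -
  have "A *v x = diagm B f *v x" for x
  proof -
    have "A *v x = (\<Sum>u\<in>B. scaleC (cinner x u) (A *v u))" by (rule mv_onb_expand[OF B])
    also have "\<dots> = (\<Sum>u\<in>B. scaleC (f u * cinner x u) u)"
      using eig by (intro sum.cong refl) (simp add: scaleC_scaleC mult.commute)
    finally show ?thesis by (simp add: diagm_mv)
  qed
  then show ?thesis by (simp add: matrix_eq)
qed

lemma diagm_mult:
  assumes B: "onb B"
  shows "diagm B f ** diagm B g = diagm B (\<lambda>u. f u * g u)"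
proof -
  have "(diagm B f ** diagm B g) *v x = diagm B (\<lambda>u. f u * g u) *v x" for x
  proof -
    have "(diagm B f ** diagm B g) *v x = diagm B f *v (diagm B g *v x)"
      by (simp add: matrix_vector_mul_assoc)
    also have "\<dots> = (\<Sum>u\<in>B. scaleC (g u * cinner x u) (diagm B f *v u))"
      by (simp add: diagm_mv[of B g] mv_sum mv_scaleC)
    also have "\<dots> = (\<Sum>u\<in>B. scaleC (f u * g u * cinner x u) u)"
      using diagm_eigen[OF B] by (intro sum.cong refl) (simp add: scaleC_scaleC algebra_simps)
    finally show ?thesis by (simp add: diagm_mv)
  qed
  then show ?thesis by (simp add: matrix_eq)
qed

lemma diagm_adj: "mat_adjoint (diagm B f) = diagm B (\<lambda>u. cnj (f u))"
  by (simp add: mat_adjoint_def diagm_def vec_eq_iff cnj_sum mult.commute mult.left_commute)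

lemma diagm_psd:
  assumes B: "onb B" and f: "\<And>u. u \<in> B \<Longrightarrow> f u = complex_of_real (g u)"
    and g: "\<And>u. u \<in> B \<Longrightarrow> 0 \<le> g u"
  shows "psd_mat (diagm B f)"
  unfolding psd_mat_iff
proof (intro conjI allI)
  show "mat_adjoint (diagm B f) = diagm B f"
    unfolding diagm_adj using f by (intro diagm_cong) simp
  fix v
  have "cinner (diagm B f *v v) v = (\<Sum>u\<in>B. f u * cinner v u * cinner u v)"
    by (simp add: diagm_mv cinner_sum_left cinner_scaleC_left)
  also have "\<dots> = (\<Sum>u\<in>B. complex_of_real (g u * (cmod (cinner v u))\<^sup>2))"
  proof (intro sum.cong refl)
    fix u assume u: "u \<in> B"
    have "cinner v u * cinner u v = complex_of_real ((cmod (cinner v u))\<^sup>2)"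
      using complex_norm_square[of "cinner v u"] cinner_commute[of u v] by simp
    then show "f u * cinner v u * cinner u v = complex_of_real (g u * (cmod (cinner v u))\<^sup>2)"
      using f[OF u] by (simp add: mult.assoc)
  qed
  finally show "0 \<le> Re (cinner (diagm B f *v v) v)"
    using g by (simp add: sum_nonneg)
qed

lemma psd_herm: "psd_mat X \<Longrightarrow> mat_adjoint X = X"
  by (simp add: psd_mat_iff)

lemma psd_form: "psd_mat X \<Longrightarrow> 0 \<le> Re (cinner (X *v v) v)"
  by (simp add: psd_mat_iff)

lemma psd_spectral:
  fixes X :: "complex ^ 'n ^ 'n"
  assumes "psd_mat X"
  shows "\<exists>B lam. onb B \<and> (\<forall>u\<in>B. X *v u = scaleC (of_real (lam u)) u \<and> 0 \<le> lam u)"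
proof -
  obtain B lam where B: "onb B" "\<forall>u\<in>B. X *v u = scaleC (of_real (lam u)) u"
    using spectral[OF psd_herm[OF assms]] by blast
  have "0 \<le> lam u" if u: "u \<in> B" for u
  proof -
    have "cinner u u = 1" using onfam_id[OF onb_onfam[OF B(1)] u u] by simp
    then have "Re (cinner (X *v u) u) = lam u" using B(2) u by (simp add: cinner_scaleC_left)
    then show ?thesis using psd_form[OF assms, of u] by simp
  qed
  then show ?thesis using B by blast
qed

lemma psd_sqrt_unique_aux:
  fixes R R' :: "complex ^ 'n ^ 'n"
  assumes R: "psd_mat R" and R': "psd_mat R'" and eq: "R' ** R' = R ** R"
  shows "R' = R"
proof -
  obtain B mu where B: "onb B" and eig: "\<forall>u\<in>B. R *v u = scaleC (of_real (mu u)) u \<and> 0 \<le> mu u"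
    using psd_spectral[OF R] by blast
  have hR': "mat_adjoint R' = R'" by (rule psd_herm[OF R'])
  have key: "R' *v u = R *v u" if u: "u \<in> B" for u
  proof -
    define m where "m = mu u"
    have Ru: "R *v u = scaleC (of_real m) u" and m0: "0 \<le> m" using eig u by (auto simp: m_def)
    have Xu: "R' *v (R' *v u) = scaleC (of_real (m * m)) u"
    proof -
      have "R' *v (R' *v u) = (R ** R) *v u" by (simp add: matrix_vector_mul_assoc eq)
      also have "\<dots> = R *v (R *v u)" by (simp add: matrix_vector_mul_assoc)
      also have "\<dots> = scaleC (of_real (m * m)) u" by (simp add: Ru mv_scaleC scaleC_scaleC)
      finally show ?thesis .
    qed
    show ?thesis
    proof (cases "m = 0")
      case True
      have "cinner (R' *v u) (R' *v u) = cinner (R' *v (R' *v u)) u"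
        by (rule herm_cinner[OF hR', symmetric])
      also have "\<dots> = 0" using Xu True by simp
      finally have "R' *v u = 0" by (simp add: cinner_eq_zero_iff)
      then show ?thesis using Ru True by simp
    next
      case False
      then have mpos: "m > 0" using m0 by simp
      define z where "z = R' *v u - scaleC (of_real m) u"
      have "R' *v z + scaleC (of_real m) z = 0"
        by (simp add: z_def mv_diff mv_scaleC Xu scaleC_diff_right scaleC_scaleC)
      then have "cinner (R' *v z + scaleC (of_real m) z) z = 0" by simp
      then have "cinner (R' *v z) z + of_real m * cinner z z = 0"
        by (simp add: cinner_add_left cinner_scaleC_left)
      then have "Re (cinner (R' *v z) z + of_real m * cinner z z) = 0" by simp
      then have "Re (cinner (R' *v z) z) + m * (norm z)\<^sup>2 = 0"
        by (simp add: cinner_self_real)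
      moreover have "0 \<le> Re (cinner (R' *v z) z)" by (rule psd_form[OF R'])
      ultimately have "m * (norm z)\<^sup>2 \<le> 0" by linarith
      then have "(norm z)\<^sup>2 \<le> 0" using mpos by (simp add: mult_le_0_iff)
      then have "z = 0" by simp
      then show ?thesis using Ru by (simp add: z_def)
    qed
  qed
  have "R' *v x = R *v x" for x
  proof -
    have "R' *v x = (\<Sum>u\<in>B. scaleC (cinner x u) (R' *v u))" by (rule mv_onb_expand[OF B])
    also have "\<dots> = (\<Sum>u\<in>B. scaleC (cinner x u) (R *v u))" using key by simp
    also have "\<dots> = R *v x" by (rule mv_onb_expand[OF B, symmetric])
    finally show ?thesis .
  qed
  then show ?thesis by (simp add: matrix_eq)
qed

lemma psd_sqrt_unique:
  fixes R :: "complex ^ 'n ^ 'n"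
  assumes R: "psd_mat R"
  shows "psd_sqrt (R ** R) = R"
  unfolding psd_sqrt_def
proof (rule the_equality)
  show "psd_mat R \<and> R ** R = R ** R" using R by simp
  fix R' assume "psd_mat R' \<and> R' ** R' = R ** R"
  then show "R' = R" using psd_sqrt_unique_aux[OF R] by blast
qed

lemma psd_sqrt_props:
  fixes X :: "complex ^ 'n ^ 'n"
  assumes X: "psd_mat X"
  shows "psd_mat (psd_sqrt X)" "psd_sqrt X ** psd_sqrt X = X"
proof -
  obtain B lam where B: "onb B" and eig: "\<forall>u\<in>B. X *v u = scaleC (of_real (lam u)) u \<and> 0 \<le> lam u"
    using psd_spectral[OF X] by blast
  define R where "R = diagm B (\<lambda>u. of_real (sqrt (lam u)))"
  have Rpsd: "psd_mat R" unfolding R_def by (rule diagm_psd[OF B]) (auto simp: eig)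
  have "R ** R = diagm B (\<lambda>u. of_real (sqrt (lam u)) * of_real (sqrt (lam u)))"
    unfolding R_def by (rule diagm_mult[OF B])
  also have "\<dots> = diagm B (\<lambda>u. of_real (lam u))"
  proof (rule diagm_cong)
    fix u assume "u \<in> B"
    then have "0 \<le> lam u" using eig by blast
    then show "of_real (sqrt (lam u)) * of_real (sqrt (lam u)) = (of_real (lam u) :: complex)"
      by (simp flip: of_real_mult)
  qed
  also have "\<dots> = X" using spectral_diagm[OF B, of X "\<lambda>u. of_real (lam u)"] eig by simp
  finally have RR: "R ** R = X" .
  have "psd_sqrt X = R" using psd_sqrt_unique[OF Rpsd] RR by simp
  then show "psd_mat (psd_sqrt X)" "psd_sqrt X ** psd_sqrt X = X" using Rpsd RR by auto
qed

lemma onb_delta: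
  fixes B :: "(complex ^ 'n) set"
  assumes B: "onb B"
  shows "(\<Sum>u\<in>B. u $ i * cnj (u $ j)) = (if i = j then 1 else 0)"
proof -
  have ci: "cinner (axis j 1) u = cnj (u $ j)" for u :: "complex ^ 'n"
  proof -
    have "cinner (axis j 1) u = (\<Sum>k\<in>UNIV. if k = j then cnj (u $ j) else 0)"
      unfolding cinner_cvec by (intro sum.cong refl) (auto simp: axis_def)
    then show ?thesis by simp
  qed
  have "(axis j 1 :: complex ^ 'n) $ i = (\<Sum>u\<in>B. scaleC (cinner (axis j 1) u) u) $ i"
    using onb_expand[OF B, of "axis j 1"] by simp
  also have "\<dots> = (\<Sum>u\<in>B. u $ i * cnj (u $ j))" by (simp add: ci mult.commute scaleC_complex_def)
  finally show ?thesis by (simp add: axis_def)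
qed

lemma trace_onb:
  fixes X :: "complex ^ 'n ^ 'n"
  assumes B: "onb B"
  shows "mat_trace X = (\<Sum>u\<in>B. cinner (X *v u) u)"
proof -
  have "(\<Sum>u\<in>B. cinner (X *v u) u) = (\<Sum>u\<in>B. \<Sum>i\<in>UNIV. \<Sum>j\<in>UNIV. X $ i $ j * (u $ j * cnj (u $ i)))"
    by (simp add: cinner_cvec matrix_vector_mult_def sum_distrib_right mult.assoc)
  also have "\<dots> = (\<Sum>i\<in>UNIV. \<Sum>j\<in>UNIV. \<Sum>u\<in>B. X $ i $ j * (u $ j * cnj (u $ i)))"
    by (simp add: sum.swap[of _ B] )
  also have "\<dots> = (\<Sum>i\<in>UNIV. \<Sum>j\<in>UNIV. X $ i $ j * (if j = i then 1 else 0))"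
    by (simp add: sum_distrib_left[symmetric] onb_delta[OF B])
  also have "\<dots> = mat_trace X"
  proof -
    have "(\<Sum>j\<in>UNIV. X $ i $ j * (if j = i then 1 else 0)) = X $ i $ i" for i
    proof -
      have "(\<Sum>j\<in>UNIV. X $ i $ j * (if j = i then 1 else 0)) = (\<Sum>j\<in>UNIV. if j = i then X $ i $ j else 0)"
        by (intro sum.cong refl) auto
      then show ?thesis by simp
    qed
    then show ?thesis by (simp add: mat_trace_def)
  qed
  finally show ?thesis by simp
qed

lemma trace_cyc: "mat_trace ((A :: complex ^ 'n ^ 'n) ** B) = mat_trace (B ** A)"
  using trace_mul_sym[of A B] by (simp add: trace_def mat_trace_def)



definition Jm :: "(complex ^ 'l) set \<Rightarrow> (complex ^ 'l \<Rightarrow> 'h::complex_inner) \<Rightarrow> complex ^ 'l \<Rightarrow> 'h" where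
  "Jm K w c = (\<Sum>q\<in>K. scaleC (cinner c q) (w q))"

definition Jm_adj :: "(complex ^ 'l) set \<Rightarrow> (complex ^ 'l \<Rightarrow> 'h::complex_inner) \<Rightarrow> 'h \<Rightarrow> complex ^ 'l" where
  "Jm_adj K w h = (\<Sum>q\<in>K. scaleC (cinner h (w q)) q)"

definition Vop :: "('l::finite \<Rightarrow> 'h::complex_inner) \<Rightarrow> complex ^ 'l \<Rightarrow> 'h" where
  "Vop v c = (\<Sum>j\<in>UNIV. scaleC (c $ j) (v j))"

definition gram :: "('l::finite \<Rightarrow> 'h::complex_inner) \<Rightarrow> complex ^ 'l ^ 'l" where
  "gram w = (\<chi> i j. cinner (w j) (w i))"

lemma Jm_adj_rel: "cinner (Jm K w c) h = cinner c (Jm_adj K w h)"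
  unfolding Jm_def Jm_adj_def
  by (simp add: cinner_sum_left cinner_sum_right cinner_scaleC_left cinner_scaleC_right
      cinner_commute[of h "w q" for q] mult.commute)

lemma Jm_add: "Jm K w (c + d) = Jm K w c + Jm K w d"
  unfolding Jm_def by (simp add: cinner_add_left scaleC_add_left sum.distrib)

lemma Jm_scaleC: "Jm K w (scaleC a c) = scaleC a (Jm K w c)"
  unfolding Jm_def by (simp add: cinner_scaleC_left scaleC_sum_right scaleC_scaleC)

lemma Jm_adj_add: "Jm_adj K w (h + g) = Jm_adj K w h + Jm_adj K w g"
  unfolding Jm_adj_def by (simp add: cinner_add_left scaleC_add_left sum.distrib)

lemma Jm_adj_scaleC: "Jm_adj K w (scaleC a h) = scaleC a (Jm_adj K w h)"
  unfolding Jm_adj_def by (simp add: cinner_scaleC_left scaleC_sum_right scaleC_scaleC)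

lemma onfam_subset: "onfam B w \<Longrightarrow> K \<subseteq> B \<Longrightarrow> onfam K w"
  unfolding onfam_def by blast

lemma Jm_norm:
  assumes "finite K" "onfam K id" "onfam K w"
  shows "norm (Jm K w c) \<le> norm c"
proof -
  have "(norm (Jm K w c))\<^sup>2 = (\<Sum>q\<in>K. (cmod (cinner c q))\<^sup>2)"
    unfolding Jm_def by (rule onfam_pythag[OF assms(3,1)])
  also have "\<dots> \<le> (norm c)\<^sup>2" using onfam_bessel[OF assms(2,1), of c] by simp
  finally show ?thesis by (rule power2_le_imp_le) simp
qed

lemma Jm_adj_norm:
  assumes "finite K" "onfam K id" "onfam K w"
  shows "norm (Jm_adj K w h) \<le> norm h"
proof -
  have "(norm (Jm_adj K w h))\<^sup>2 = (\<Sum>q\<in>K. (cmod (cinner h (w q)))\<^sup>2)"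
    unfolding Jm_adj_def using onfam_pythag[OF assms(2,1)] by simp
  also have "\<dots> \<le> (norm h)\<^sup>2" by (rule onfam_bessel[OF assms(3,1)])
  finally show ?thesis by (rule power2_le_imp_le) simp
qed

lemma cinner_axis: "cinner (axis j 1) (u :: complex ^ 'n) = cnj (u $ j)"
proof -
  have "cinner (axis j 1) u = (\<Sum>k\<in>UNIV. if k = j then cnj (u $ j) else 0)"
    unfolding cinner_cvec by (intro sum.cong refl) (auto simp: axis_def)
  then show ?thesis by simp
qed

lemma cinner_axis_right: "cinner (u :: complex ^ 'n) (axis j 1) = u $ j"
  using cinner_axis[of j u] cinner_commute[of u "axis j 1"] by simp

lemma Jm_exp:
  fixes K :: "(complex ^ 'l) set"
  shows "Jm K w c = (\<Sum>k\<in>UNIV. scaleC (c $ k) (Jm K w (axis k 1)))"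
proof -
  have "Jm K w c = (\<Sum>q\<in>K. \<Sum>k\<in>UNIV. scaleC (c $ k * cnj (q $ k)) (w q))"
    unfolding Jm_def cinner_cvec by (simp add: scaleC_sum_left)
  also have "\<dots> = (\<Sum>k\<in>UNIV. \<Sum>q\<in>K. scaleC (c $ k * cnj (q $ k)) (w q))" by (rule sum.swap)
  also have "\<dots> = (\<Sum>k\<in>UNIV. scaleC (c $ k) (Jm K w (axis k 1)))"
    unfolding Jm_def cinner_axis by (simp add: scaleC_sum_right scaleC_scaleC)
  finally show ?thesis .
qed

lemma Vop_add: "Vop v (c + d) = Vop v c + Vop v d"
  unfolding Vop_def by (simp add: scaleC_add_left sum.distrib)

lemma Vop_scaleC: "Vop v (scaleC a c) = scaleC a (Vop v c)"
  unfolding Vop_def by (simp add: scaleC_sum_right scaleC_scaleC scaleC_complex_def)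

lemma Vop_zero: "Vop v 0 = 0"
  unfolding Vop_def by simp

lemma Vop_sum: "Vop v (\<Sum>k\<in>K. f k) = (\<Sum>k\<in>K. Vop v (f k))"
  by (induction K rule: infinite_finite_induct) (auto simp: Vop_add Vop_zero)

lemma Vop_axis: "Vop v (axis j 1) = v j"
proof -
  have "Vop v (axis j 1) = (\<Sum>k\<in>UNIV. if k = j then v j else 0)"
    unfolding Vop_def by (intro sum.cong refl) (auto simp: axis_def scaleC_one)
  then show ?thesis by simp
qed

lemma gram_form: "cinner (gram v *v c) d = cinner (Vop v c) (Vop v d)"
proof -
  have "cinner (gram v *v c) d = (\<Sum>i\<in>UNIV. (\<Sum>j\<in>UNIV. cinner (v j) (v i) * c $ j) * cnj (d $ i))"
    by (simp add: cinner_cvec gram_def matrix_vector_mult_def)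
  also have "\<dots> = (\<Sum>i\<in>UNIV. \<Sum>j\<in>UNIV. c $ j * (cnj (d $ i) * cinner (v j) (v i)))"
    by (intro sum.cong refl) (simp add: sum_distrib_right sum_distrib_left mult.commute mult.left_commute)
  also have "\<dots> = cinner (Vop v c) (Vop v d)"
    unfolding Vop_def
    by (simp add: cinner_sum_left cinner_sum_right cinner_scaleC_left cinner_scaleC_right
        sum_distrib_left mult.commute mult.left_commute)
  finally show ?thesis .
qed

lemma gram_psd: "psd_mat (gram v)"
  unfolding psd_mat_iff
proof (intro conjI allI)
  show "mat_adjoint (gram v) = gram v"
  proof -
    have "cnj (cinner (v i) (v j)) = cinner (v j) (v i)" for i j
      by (rule cinner_commute[symmetric])
    then show ?thesis by (simp add: mat_adjoint_def gram_def vec_eq_iff)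
  qed
  fix c
  show "0 \<le> Re (cinner (gram v *v c) c)" unfolding gram_form by (rule cinner_ge_zero)
qed

lemma psd_sqrt_eigen:
  fixes X :: "complex ^ 'n ^ 'n"
  assumes X: "psd_mat X" and B: "onb B"
    and eig: "\<forall>u\<in>B. X *v u = scaleC (of_real (lam u)) u \<and> 0 \<le> lam u"
  shows "\<forall>u\<in>B. psd_sqrt X *v u = scaleC (of_real (sqrt (lam u))) u"
proof -
  define R where "R = diagm B (\<lambda>u. of_real (sqrt (lam u)))"
  have Rpsd: "psd_mat R" unfolding R_def by (rule diagm_psd[OF B]) (auto simp: eig)
  have "R ** R = diagm B (\<lambda>u. of_real (sqrt (lam u)) * of_real (sqrt (lam u)))"
    unfolding R_def by (rule diagm_mult[OF B])
  also have "\<dots> = diagm B (\<lambda>u. of_real (lam u))"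
  proof (rule diagm_cong)
    fix u assume "u \<in> B"
    then have "0 \<le> lam u" using eig by blast
    then show "of_real (sqrt (lam u)) * of_real (sqrt (lam u)) = (of_real (lam u) :: complex)"
      by (simp flip: of_real_mult)
  qed
  also have "\<dots> = X" using spectral_diagm[OF B, of X "\<lambda>u. of_real (lam u)"] eig by simp
  finally have RR: "R ** R = X" .
  have "psd_sqrt X = R" using psd_sqrt_unique[OF Rpsd] RR by simp
  then show ?thesis unfolding R_def using diagm_eigen[OF B] by simp
qed

lemma gram_factor:
  fixes v :: "'l::finite \<Rightarrow> 'h::complex_inner"
  shows "\<exists>K w. finite K \<and> onfam K id \<and> onfam K w \<and>
    (\<forall>c. Jm K w (psd_sqrt (gram v) *v c) = Vop v c) \<and>
    (\<forall>c. Jm_adj K w (Vop v c) = psd_sqrt (gram v) *v c)"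
proof -
  define X where "X = gram v"
  define P where "P = psd_sqrt X"
  have Xpsd: "psd_mat X" unfolding X_def by (rule gram_psd)
  obtain B lam where B: "onb B" and eig: "\<forall>u\<in>B. X *v u = scaleC (of_real (lam u)) u \<and> 0 \<le> lam u"
    using psd_spectral[OF Xpsd] by blast
  have Peig: "\<forall>u\<in>B. P *v u = scaleC (of_real (sqrt (lam u))) u"
    unfolding P_def by (rule psd_sqrt_eigen[OF Xpsd B eig])
  have Ppsd: "psd_mat P" unfolding P_def by (rule psd_sqrt_props(1)[OF Xpsd])
  have finB: "finite B" and onB: "onfam B id" using B by (auto simp: onb_def)
  define K where "K = {p\<in>B. lam p > 0}"
  define w where "w p = scaleC (of_real (1 / sqrt (lam p))) (Vop v p)" for p
  have finK: "finite K" using finB by (simp add: K_def)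
  have onK: "onfam K id" by (rule onfam_subset[OF onB]) (auto simp: K_def)
  have VV: "cinner (Vop v p) (Vop v q) = of_real (lam p) * (if p = q then 1 else 0)"
    if "p \<in> B" "q \<in> B" for p q
  proof -
    have "cinner (Vop v p) (Vop v q) = cinner (X *v p) q" by (simp add: X_def gram_form)
    also have "\<dots> = of_real (lam p) * cinner p q" using eig that by (simp add: cinner_scaleC_left)
    finally show ?thesis using onfam_id[OF onB that] by simp
  qed
  have onw: "onfam K w"
    unfolding onfam_def
  proof (intro ballI)
    fix p q assume p: "p \<in> K" and q: "q \<in> K"
    then have pB: "p \<in> B" "lam p > 0" and qB: "q \<in> B" "lam q > 0" by (auto simp: K_def)
    have "cinner (w p) (w q) = of_real (1 / sqrt (lam p)) * of_real (1 / sqrt (lam q)) *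
        (of_real (lam p) * (if p = q then 1 else 0))"
      unfolding w_def using VV[OF pB(1) qB(1)] by (simp add: cinner_scaleC_left cinner_scaleC_right)
    also have "\<dots> = (if p = q then 1 else 0)"
    proof (cases "p = q")
      case True
      have "of_real (1 / sqrt (lam p)) * of_real (1 / sqrt (lam p)) * of_real (lam p) = (1 :: complex)"
        using pB(2) by (simp flip: of_real_mult)
      then show ?thesis using True by simp
    qed simp
    finally show "cinner (w p) (w q) = (if p = q then 1 else 0)" .
  qed
  have V0: "Vop v p = 0" if "p \<in> B" "\<not> lam p > 0" for p
  proof -
    have "lam p = 0" using that eig by force
    then have "cinner (Vop v p) (Vop v p) = 0" using VV[OF that(1) that(1)] by simp
    then show ?thesis by (simp add: cinner_eq_zero_iff)
  qed
  have Pc: "cinner (P *v c) p = of_real (sqrt (lam p)) * cinner c p" if "p \<in> B" for c p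
  proof -
    have "cinner (P *v c) p = cinner c (P *v p)" by (rule herm_cinner[OF psd_herm[OF Ppsd]])
    also have "\<dots> = of_real (sqrt (lam p)) * cinner c p"
      using Peig that by (simp add: cinner_scaleC_right)
    finally show ?thesis .
  qed
  have J1: "Jm K w (P *v c) = Vop v c" for c
  proof -
    have "Jm K w (P *v c) = (\<Sum>p\<in>K. scaleC (cinner c p) (Vop v p))"
      unfolding Jm_def
    proof (intro sum.cong refl)
      fix p assume p: "p \<in> K"
      then have pB: "p \<in> B" and lp: "lam p > 0" by (auto simp: K_def)
      have "of_real (sqrt (lam p)) * cinner c p * of_real (1 / sqrt (lam p)) = cinner c p"
        using lp by (simp add: field_simps)
      then show "scaleC (cinner (P *v c) p) (w p) = scaleC (cinner c p) (Vop v p)"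
        unfolding w_def Pc[OF pB] by (simp add: scaleC_scaleC)
    qed
    also have "\<dots> = (\<Sum>p\<in>B. scaleC (cinner c p) (Vop v p))"
      by (rule sum.mono_neutral_left[OF finB]) (auto simp: K_def V0)
    also have "\<dots> = Vop v (\<Sum>p\<in>B. scaleC (cinner c p) p)" by (simp add: Vop_sum Vop_scaleC)
    also have "\<dots> = Vop v c" using onb_expand[OF B, of c] by simp
    finally show ?thesis .
  qed
  have J2: "Jm_adj K w (Vop v c) = P *v c" for c
  proof -
    have "Jm_adj K w (Vop v c) = (\<Sum>p\<in>K. scaleC (cinner c p * of_real (sqrt (lam p))) p)"
      unfolding Jm_adj_def
    proof (intro sum.cong refl)
      fix p assume p: "p \<in> K"
      then have pB: "p \<in> B" and lp: "lam p > 0" by (auto simp: K_def)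
      have "cinner (Vop v c) (Vop v p) = cinner (X *v c) p" by (simp add: X_def gram_form)
      also have "\<dots> = cinner c (X *v p)" by (rule herm_cinner[OF psd_herm[OF Xpsd]])
      also have "\<dots> = of_real (lam p) * cinner c p" using eig pB by (simp add: cinner_scaleC_right)
      finally have e: "cinner (Vop v c) (Vop v p) = of_real (lam p) * cinner c p" .
      have "of_real (1 / sqrt (lam p)) * (of_real (lam p) * cinner c p) =
          cinner c p * of_real (sqrt (lam p))"
      proof -
        have "1 / sqrt (lam p) * lam p = sqrt (lam p)"
          using lp by (metis real_div_sqrt less_eq_real_def times_divide_eq_left mult_1)
        have "(of_real (1 / sqrt (lam p)) :: complex) * of_real (lam p) = of_real (1 / sqrt (lam p) * lam p)"
          by (rule of_real_mult[symmetric])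
        also have "\<dots> = of_real (sqrt (lam p))" by (simp only: \<open>1 / sqrt (lam p) * lam p = sqrt (lam p)\<close>)
        finally have "(of_real (1 / sqrt (lam p)) :: complex) * of_real (lam p) = of_real (sqrt (lam p))" .
        then show ?thesis by (simp add: algebra_simps)
      qed
      then show "scaleC (cinner (Vop v c) (w p)) p = scaleC (cinner c p * of_real (sqrt (lam p))) p"
        unfolding w_def by (simp add: cinner_scaleC_right e)
    qed
    also have "\<dots> = (\<Sum>p\<in>B. scaleC (cinner c p * of_real (sqrt (lam p))) p)"
    proof (rule sum.mono_neutral_left[OF finB])
      show "K \<subseteq> B" by (auto simp: K_def)
      show "\<forall>p\<in>B - K. scaleC (cinner c p * of_real (sqrt (lam p))) p = 0"
        using eig by (force simp: K_def)
    qed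
    also have "\<dots> = (\<Sum>p\<in>B. scaleC (cinner c p) (P *v p))"
      using Peig by (intro sum.cong refl) (simp add: scaleC_scaleC)
    also have "\<dots> = P *v c" by (rule mv_onb_expand[OF B, symmetric])
    finally show ?thesis .
  qed
  show ?thesis
    using finK onK onw J1 J2 unfolding P_def X_def by blast
qed



lemma mv_axis_nth: "((M :: complex ^ 'n ^ 'n) *v axis j 1) $ i = M $ i $ j"
proof -
  have "(M *v axis j 1) $ i = (\<Sum>k\<in>UNIV. if k = j then M $ i $ j else 0)"
    unfolding matrix_vector_mult_def vec_lambda_beta by (intro sum.cong refl) (auto simp: axis_def)
  then show ?thesis by simp
qed

lemma trace_form:
  fixes P Q C :: "complex ^ 'l ^ 'l"
  assumes hP: "mat_adjoint P = P"
  shows "(\<Sum>j\<in>UNIV. cinner (C *v (Q *v axis j 1)) (P *v axis j 1)) = mat_trace (C ** (Q ** P))"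
proof -
  have "cinner (C *v (Q *v axis j 1)) (P *v axis j 1) = (P ** C ** Q) $ j $ j" for j
  proof -
    have "cinner (C *v (Q *v axis j 1)) (P *v axis j 1) = cinner (P *v (C *v (Q *v axis j 1))) (axis j 1)"
      by (rule herm_cinner[OF hP, symmetric])
    also have "\<dots> = ((P ** C ** Q) *v axis j 1) $ j"
      by (simp add: cinner_axis_right matrix_vector_mul_assoc matrix_mul_assoc)
    also have "\<dots> = (P ** C ** Q) $ j $ j" by (rule mv_axis_nth)
    finally show ?thesis .
  qed
  then have "(\<Sum>j\<in>UNIV. cinner (C *v (Q *v axis j 1)) (P *v axis j 1)) = mat_trace (P ** (C ** Q))"
    by (simp add: mat_trace_def matrix_mul_assoc)
  also have "\<dots> = mat_trace ((C ** Q) ** P)" by (rule trace_cyc)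
  also have "\<dots> = mat_trace (C ** (Q ** P))" by (simp add: matrix_mul_assoc)
  finally show ?thesis .
qed

lemma herm_from_cinner:
  fixes A :: "complex ^ 'n ^ 'n"
  assumes "\<And>x y. cinner (A *v x) y = cinner x (A *v y)"
  shows "mat_adjoint A = A"
proof -
  have "mat_adjoint A *v y = A *v y" for y
  proof (rule cinner_eq_zero_all)
    fix z
    have "cinner z (mat_adjoint A *v y) = cinner (A *v z) y" by (rule mv_cinner_adj[symmetric])
    also have "\<dots> = cinner z (A *v y)" by (rule assms)
    finally show "cinner z (mat_adjoint A *v y) = cinner z (A *v y)" .
  qed
  then show ?thesis by (simp add: matrix_eq)
qed

lemma tgm_setup:
  fixes X Y :: "complex ^ 'l ^ 'l"
  assumes X: "psd_mat X" and Y: "psd_mat Y"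
  shows "\<exists>Bs s. onb Bs \<and> (\<forall>f\<in>Bs. 0 \<le> s f) \<and> tgm X Y = (\<Sum>f\<in>Bs. s f) \<and>
    (\<forall>f\<in>Bs. \<forall>g\<in>Bs. cinner ((psd_sqrt Y ** psd_sqrt X) *v f) ((psd_sqrt Y ** psd_sqrt X) *v g)
        = of_real (s f * s f) * cinner f g)"
proof -
  define P where "P = psd_sqrt X"
  define Q where "Q = psd_sqrt Y"
  define M where "M = P ** Y ** P"
  have hP: "mat_adjoint P = P" unfolding P_def by (rule psd_herm[OF psd_sqrt_props(1)[OF X]])
  have hQ: "mat_adjoint Q = Q" unfolding Q_def by (rule psd_herm[OF psd_sqrt_props(1)[OF Y]])
  have hY: "mat_adjoint Y = Y" by (rule psd_herm[OF Y])
  have QQ: "Q ** Q = Y" unfolding Q_def by (rule psd_sqrt_props(2)[OF Y])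
  have Mx: "M *v x = P *v (Y *v (P *v x))" for x by (simp add: M_def matrix_vector_mul_assoc matrix_mul_assoc)
  have Mc: "cinner (M *v x) y = cinner x (M *v y)" for x y
  proof -
    have "cinner (M *v x) y = cinner (Y *v (P *v x)) (P *v y)" by (simp add: Mx herm_cinner[OF hP])
    also have "\<dots> = cinner (P *v x) (Y *v (P *v y))" by (rule herm_cinner[OF hY])
    also have "\<dots> = cinner x (M *v y)" by (simp add: Mx herm_cinner[OF hP])
    finally show ?thesis .
  qed
  have Mpsd: "psd_mat M" unfolding psd_mat_iff
  proof (intro conjI allI)
    show "mat_adjoint M = M" by (rule herm_from_cinner[OF Mc])
    fix v
    have "cinner (M *v v) v = cinner (Y *v (P *v v)) (P *v v)" by (simp add: Mx herm_cinner[OF hP])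
    then show "0 \<le> Re (cinner (M *v v) v)" using psd_form[OF Y] by simp
  qed
  define S where "S = psd_sqrt M"
  have SS: "S ** S = M" unfolding S_def by (rule psd_sqrt_props(2)[OF Mpsd])
  have Spsd: "psd_mat S" unfolding S_def by (rule psd_sqrt_props(1)[OF Mpsd])
  obtain Bs s where Bs: "onb Bs" and eig: "\<forall>f\<in>Bs. S *v f = scaleC (of_real (s f)) f \<and> 0 \<le> s f"
    using psd_spectral[OF Spsd] by blast
  have ff: "cinner f f = 1" if "f \<in> Bs" for f using onfam_id[OF onb_onfam[OF Bs] that that] by simp
  have "tgm X Y = Re (mat_trace S)" by (simp add: tgm_def S_def M_def P_def)
  also have "\<dots> = Re (\<Sum>f\<in>Bs. cinner (S *v f) f)" by (simp add: trace_onb[OF Bs])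
  also have "\<dots> = (\<Sum>f\<in>Bs. s f)"
    using eig ff by (simp add: Re_sum cinner_scaleC_left)
  finally have tg: "tgm X Y = (\<Sum>f\<in>Bs. s f)" .
  have ZZ: "cinner ((Q ** P) *v f) ((Q ** P) *v g) = of_real (s f * s f) * cinner f g"
    if f: "f \<in> Bs" and g: "g \<in> Bs" for f g
  proof -
    have "cinner ((Q ** P) *v f) ((Q ** P) *v g) = cinner (Q *v (P *v f)) (Q *v (P *v g))"
      by (simp add: matrix_vector_mul_assoc)
    also have "\<dots> = cinner (P *v f) (Q *v (Q *v (P *v g)))" by (rule herm_cinner[OF hQ])
    also have "\<dots> = cinner (P *v f) (Y *v (P *v g))"
      using matrix_vector_mul_assoc[of Q Q "P *v g"] by (simp only: QQ)
    also have "\<dots> = cinner f (M *v g)" by (simp add: Mx herm_cinner[OF hP])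
    also have "\<dots> = cinner (M *v f) g" by (rule Mc[symmetric])
    also have "M *v f = S *v (S *v f)" by (simp add: SS[symmetric] matrix_vector_mul_assoc)
    also have "\<dots> = scaleC (of_real (s f * s f)) f"
      using eig f by (simp add: mv_scaleC scaleC_scaleC)
    finally show ?thesis by (simp add: cinner_scaleC_left)
  qed
  show ?thesis using Bs eig tg ZZ unfolding P_def Q_def by blast
qed

lemma bop_zero: "bop x \<Longrightarrow> x 0 = 0"
  using bop_scaleC[of x 0 0] by simp

lemma bop_sum: "bop x \<Longrightarrow> x (\<Sum>k\<in>K. f k) = (\<Sum>k\<in>K. x (f k))"
  by (induction K rule: infinite_finite_induct) (auto simp: bop_add bop_zero)

definition om :: "'k set \<Rightarrow> ('k \<Rightarrow> complex ^ 'n) \<Rightarrow> ('k \<Rightarrow> complex ^ 'n) \<Rightarrow> complex ^ 'n ^ 'n" where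
  "om K a b = (\<chi> i k. \<Sum>f\<in>K. a f $ i * cnj (b f $ k))"

lemma om_mv: "om K a b *v c = (\<Sum>f\<in>K. scaleC (cinner c (b f)) (a f))"
proof (rule vec_eq_iff[THEN iffD2], rule allI)
  fix i
  have "(om K a b *v c) $ i = (\<Sum>k\<in>UNIV. \<Sum>f\<in>K. a f $ i * cnj (b f $ k) * c $ k)"
    by (simp add: om_def matrix_vector_mult_def sum_distrib_right)
  also have "\<dots> = (\<Sum>f\<in>K. \<Sum>k\<in>UNIV. a f $ i * cnj (b f $ k) * c $ k)" by (rule sum.swap)
  also have "\<dots> = (\<Sum>f\<in>K. (\<Sum>k\<in>UNIV. c $ k * cnj (b f $ k)) * a f $ i)"
    by (intro sum.cong refl) (simp add: sum_distrib_left sum_distrib_right mult.commute mult.left_commute)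
  also have "\<dots> = (\<Sum>f\<in>K. scaleC (cinner c (b f)) (a f)) $ i"
    by (simp add: cinner_cvec scaleC_complex_def)
  finally show "(om K a b *v c) $ i = (\<Sum>f\<in>K. scaleC (cinner c (b f)) (a f)) $ i" .
qed



lemma sum_delta_fam:
  assumes on: "onfam K w" and fin: "finite K" and u: "u \<in> K"
  shows "(\<Sum>v\<in>K. scaleC (cinner (w u) (w v)) (a v)) = a u"
proof -
  have "(\<Sum>v\<in>K. scaleC (cinner (w u) (w v)) (a v)) = (\<Sum>v\<in>K. if v = u then a u else 0)"
    using on u unfolding onfam_def by (intro sum.cong refl) (auto simp: scaleC_one)
  also have "\<dots> = a u" using fin u by simp
  finally show ?thesis .
qed

lemma norm_from_cinner:
  assumes "cinner z z = of_real (s * s)" "0 \<le> s"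
  shows "norm z = s"
proof -
  have "(norm z)\<^sup>2 = Re (cinner z z)" by (rule norm_sq_cinner)
  also have "\<dots> = s * s" using assms(1) by simp
  finally have "(norm z)\<^sup>2 = s\<^sup>2" by (simp add: power2_eq_square)
  then show ?thesis using assms(2) by (simp add: power2_eq_iff_nonneg)
qed

lemma key_upper:
  fixes u v :: "'l::finite \<Rightarrow> 'h::complex_inner" and x :: "'h \<Rightarrow> 'h"
  assumes x: "bop x" "onorm x \<le> 1"
  shows "cmod (\<Sum>j\<in>UNIV. cinner (x (u j)) (v j)) \<le> tgm (gram v) (gram u)"
proof -
  obtain Kp wp where Kp: "finite Kp" "onfam Kp id" "onfam Kp wp"
      "\<forall>c. Jm Kp wp (psd_sqrt (gram v) *v c) = Vop v c"
    using gram_factor[of v] by blast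
  obtain Kq wq where Kq: "finite Kq" "onfam Kq id" "onfam Kq wq"
      "\<forall>c. Jm Kq wq (psd_sqrt (gram u) *v c) = Vop u c"
    using gram_factor[of u] by blast
  define P where "P = psd_sqrt (gram v)"
  define Q where "Q = psd_sqrt (gram u)"
  obtain Bs s where Bs: "onb Bs" and s0: "\<forall>f\<in>Bs. 0 \<le> s f"
    and tg: "tgm (gram v) (gram u) = (\<Sum>f\<in>Bs. s f)"
    and ZZ: "\<forall>f\<in>Bs. \<forall>g\<in>Bs. cinner ((Q ** P) *v f) ((Q ** P) *v g) = of_real (s f * s f) * cinner f g"
    using tgm_setup[OF gram_psd gram_psd, of v u] unfolding P_def Q_def by blast
  have hP: "mat_adjoint P = P" unfolding P_def by (rule psd_herm[OF psd_sqrt_props(1)[OF gram_psd]])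
  have xb: "norm (x w) \<le> norm w" for w
  proof -
    have "norm (x w) \<le> onorm x * norm w" by (rule bop_bound[OF x(1)])
    also have "\<dots> \<le> 1 * norm w" using x(2) by (intro mult_right_mono) auto
    finally show ?thesis by simp
  qed
  define E where "E i k = cinner (x (Jm Kq wq (axis k 1))) (Jm Kp wp (axis i 1))" for i k
  define C where "C = (\<chi> i k. E i k)"
  have Cform: "cinner (C *v c) d = cinner (x (Jm Kq wq c)) (Jm Kp wp d)" for c d
  proof -
    have "cinner (C *v c) d = (\<Sum>i\<in>UNIV. (\<Sum>k\<in>UNIV. E i k * c $ k) * cnj (d $ i))"
      by (simp add: cinner_cvec matrix_vector_mult_def C_def)
    also have "\<dots> = (\<Sum>i\<in>UNIV. \<Sum>k\<in>UNIV. c $ k * (cnj (d $ i) * E i k))"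
      by (intro sum.cong refl) (simp add: sum_distrib_right sum_distrib_left mult.commute mult.left_commute)
    also have "\<dots> = cinner (\<Sum>k\<in>UNIV. scaleC (c $ k) (x (Jm Kq wq (axis k 1))))
        (\<Sum>i\<in>UNIV. scaleC (d $ i) (Jm Kp wp (axis i 1)))"
      unfolding E_def
      by (simp add: cinner_sum_left cinner_sum_right cinner_scaleC_left cinner_scaleC_right
          sum_distrib_left mult.commute mult.left_commute)
    also have "\<dots> = cinner (x (Jm Kq wq c)) (Jm Kp wp d)"
      using Jm_exp[of Kq wq c] Jm_exp[of Kp wp d]
      by (simp add: bop_sum[OF x(1)] bop_scaleC[OF x(1)])
    finally show ?thesis .
  qed
  have uj: "u j = Jm Kq wq (Q *v axis j 1)" for j using Kq(4) by (simp add: Q_def Vop_axis)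
  have vj: "v j = Jm Kp wp (P *v axis j 1)" for j using Kp(4) by (simp add: P_def Vop_axis)
  have "(\<Sum>j\<in>UNIV. cinner (x (u j)) (v j)) = (\<Sum>j\<in>UNIV. cinner (C *v (Q *v axis j 1)) (P *v axis j 1))"
    by (simp add: Cform uj vj)
  also have "\<dots> = mat_trace (C ** (Q ** P))" by (rule trace_form[OF hP])
  also have "\<dots> = (\<Sum>f\<in>Bs. cinner ((C ** (Q ** P)) *v f) f)" by (rule trace_onb[OF Bs])
  finally have S: "(\<Sum>j\<in>UNIV. cinner (x (u j)) (v j)) = (\<Sum>f\<in>Bs. cinner (C *v ((Q ** P) *v f)) f)"
    by (simp add: matrix_vector_mul_assoc)
  have trm: "cmod (cinner (C *v ((Q ** P) *v f)) f) \<le> s f" if f: "f \<in> Bs" for f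
  proof -
    have ff: "cinner f f = 1" using onfam_id[OF onb_onfam[OF Bs] f f] by simp
    have nZ: "norm ((Q ** P) *v f) = s f"
      by (rule norm_from_cinner) (use ZZ f ff s0 in auto)
    have nf: "norm f = 1" using ff by (simp add: norm_eq_sqrt_cinner)
    have "cmod (cinner (C *v ((Q ** P) *v f)) f) = cmod (cinner (x (Jm Kq wq ((Q ** P) *v f))) (Jm Kp wp f))"
      by (simp add: Cform)
    also have "\<dots> \<le> norm (x (Jm Kq wq ((Q ** P) *v f))) * norm (Jm Kp wp f)" by (rule Cauchy_Schwarz)
    also have "\<dots> \<le> norm ((Q ** P) *v f) * norm f"
      using xb Jm_norm[OF Kq(1-3)] Jm_norm[OF Kp(1-3)]
      by (intro mult_mono) (auto intro: order_trans)
    also have "\<dots> = s f" using nZ nf by simp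
    finally show ?thesis .
  qed
  have "cmod (\<Sum>j\<in>UNIV. cinner (x (u j)) (v j)) \<le> (\<Sum>f\<in>Bs. cmod (cinner (C *v ((Q ** P) *v f)) f))"
    unfolding S by (rule norm_sum)
  also have "\<dots> \<le> (\<Sum>f\<in>Bs. s f)" using trm by (intro sum_mono) auto
  finally show ?thesis using tg by simp
qed

lemma key_attain:
  fixes u v :: "'l::finite \<Rightarrow> 'h::complex_inner"
  shows "\<exists>x. bop x \<and> onorm x \<le> 1 \<and>
    (\<Sum>j\<in>UNIV. cinner (x (u j)) (v j)) = of_real (tgm (gram v) (gram u))"
proof -
  obtain Kp wp where Kp: "finite Kp" "onfam Kp id" "onfam Kp wp"
      "\<forall>c. Jm_adj Kp wp (Vop v c) = psd_sqrt (gram v) *v c"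
    using gram_factor[of v] by blast
  obtain Kq wq where Kq: "finite Kq" "onfam Kq id" "onfam Kq wq"
      "\<forall>c. Jm_adj Kq wq (Vop u c) = psd_sqrt (gram u) *v c"
    using gram_factor[of u] by blast
  define P where "P = psd_sqrt (gram v)"
  define Q where "Q = psd_sqrt (gram u)"
  obtain Bs s where Bs: "onb Bs" and s0: "\<forall>f\<in>Bs. 0 \<le> s f"
    and tg: "tgm (gram v) (gram u) = (\<Sum>f\<in>Bs. s f)"
    and ZZ: "\<forall>f\<in>Bs. \<forall>g\<in>Bs. cinner ((Q ** P) *v f) ((Q ** P) *v g) = of_real (s f * s f) * cinner f g"
    using tgm_setup[OF gram_psd gram_psd, of v u] unfolding P_def Q_def by blast
  have hP: "mat_adjoint P = P" unfolding P_def by (rule psd_herm[OF psd_sqrt_props(1)[OF gram_psd]])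
  have finBs: "finite Bs" and onBs: "onfam Bs id" using Bs by (auto simp: onb_def)
  have ff: "cinner f f = 1" if "f \<in> Bs" for f using onfam_id[OF onBs that that] by simp
  define Z where "Z = Q ** P"
  define Ks where "Ks = {f\<in>Bs. s f > 0}"
  define g where "g f = scaleC (of_real (1 / s f)) (Z *v f)" for f
  have finKs: "finite Ks" using finBs by (simp add: Ks_def)
  have onKs: "onfam Ks id" by (rule onfam_subset[OF onBs]) (auto simp: Ks_def)
  have ong: "onfam Ks g"
    unfolding onfam_def
  proof (intro ballI)
    fix f f' assume f: "f \<in> Ks" and f': "f' \<in> Ks"
    then have fB: "f \<in> Bs" "s f > 0" and fB': "f' \<in> Bs" "s f' > 0" by (auto simp: Ks_def)
    have "cinner (g f) (g f') = of_real (1 / s f) * of_real (1 / s f') * (of_real (s f * s f) * cinner f f')"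
      using ZZ fB(1) fB'(1) by (simp add: g_def Z_def cinner_scaleC_left cinner_scaleC_right)
    also have "\<dots> = (if f = f' then 1 else 0)"
    proof (cases "f = f'")
      case True
      have "(of_real (1 / s f) :: complex) * of_real (1 / s f) * of_real (s f * s f) = of_real (1 / s f * (1 / s f) * (s f * s f))"
        by simp
      also have "1 / s f * (1 / s f) * (s f * s f) = 1" using fB(2) by (simp add: field_simps)
      finally show ?thesis using True ff[OF fB(1)] by simp
    next
      case False
      then show ?thesis using onfam_id[OF onBs fB(1) fB'(1)] by simp
    qed
    finally show "cinner (g f) (g f') = (if f = f' then 1 else 0)" .
  qed
  define D where "D = om Ks (\<lambda>f. f) g"
  have Dmv: "D *v c = Jm_adj Ks g c" for c by (simp add: D_def om_mv Jm_adj_def)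
  define x where "x h = Jm Kp wp (D *v (Jm_adj Kq wq h))" for h
  have xnorm: "norm (x h) \<le> norm h" for h
  proof -
    have "norm (x h) \<le> norm (D *v (Jm_adj Kq wq h))" unfolding x_def by (rule Jm_norm[OF Kp(1-3)])
    also have "\<dots> \<le> norm (Jm_adj Kq wq h)" unfolding Dmv by (rule Jm_adj_norm[OF finKs onKs ong])
    also have "\<dots> \<le> norm h" by (rule Jm_adj_norm[OF Kq(1-3)])
    finally show ?thesis .
  qed
  have xadd: "x (h + k) = x h + x k" for h k by (simp add: x_def Jm_adj_add mv_add Jm_add)
  have xsc: "x (scaleC a h) = scaleC a (x h)" for a h by (simp add: x_def Jm_adj_scaleC mv_scaleC Jm_scaleC)
  have bl: "bounded_linear x"
  proof (rule bounded_linear_intro[of _ 1])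
    show "x (h + k) = x h + x k" for h k by (rule xadd)
    show "x (scaleR r h) = scaleR r (x h)" for r h by (simp add: scaleR_scaleC xsc)
    show "norm (x h) \<le> norm h * 1" for h using xnorm by simp
  qed
  have bx: "bop x" unfolding bop_def using bl xsc by blast
  have ox: "onorm x \<le> 1" by (rule onorm_bound) (use xnorm in simp_all)
  have "(\<Sum>j\<in>UNIV. cinner (x (u j)) (v j)) = (\<Sum>j\<in>UNIV. cinner (D *v (Q *v axis j 1)) (P *v axis j 1))"
  proof (intro sum.cong refl)
    fix j
    have "cinner (x (u j)) (v j) = cinner (D *v (Jm_adj Kq wq (u j))) (Jm_adj Kp wp (v j))"
      unfolding x_def by (rule Jm_adj_rel)
    also have "Jm_adj Kq wq (u j) = Q *v axis j 1"
      using Kq(4)[rule_format, of "axis j 1"] unfolding Vop_axis Q_def .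
    also have "Jm_adj Kp wp (v j) = P *v axis j 1"
      using Kp(4)[rule_format, of "axis j 1"] unfolding Vop_axis P_def .
    finally show "cinner (x (u j)) (v j) = cinner (D *v (Q *v axis j 1)) (P *v axis j 1)" .
  qed
  also have "\<dots> = mat_trace (D ** (Q ** P))" by (rule trace_form[OF hP])
  also have "\<dots> = (\<Sum>f\<in>Bs. cinner ((D ** Z) *v f) f)" unfolding Z_def by (rule trace_onb[OF Bs])
  also have "\<dots> = (\<Sum>f\<in>Bs. complex_of_real (s f))"
  proof (intro sum.cong refl)
    fix f assume f: "f \<in> Bs"
    show "cinner ((D ** Z) *v f) f = complex_of_real (s f)"
    proof (cases "s f > 0")
      case True
      then have fK: "f \<in> Ks" using f by (simp add: Ks_def)
      have Zf: "Z *v f = scaleC (of_real (s f)) (g f)"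
        using True by (simp add: g_def scaleC_scaleC scaleC_one)
      have "D *v g f = f"
        unfolding Dmv Jm_adj_def by (rule sum_delta_fam[OF ong finKs fK])
      then have "(D ** Z) *v f = scaleC (of_real (s f)) f"
        by (simp add: matrix_vector_mul_assoc[symmetric] Zf mv_scaleC)
      then show ?thesis using ff[OF f] by (simp add: cinner_scaleC_left)
    next
      case False
      then have s0f: "s f = 0" using s0 f by force
      have "norm (Z *v f) = s f"
        by (rule norm_from_cinner) (use ZZ f ff[OF f] s0 in \<open>auto simp: Z_def\<close>)
      then have "Z *v f = 0" using s0f by simp
      then show ?thesis using s0f by (simp add: matrix_vector_mul_assoc[symmetric] mv_zero)
    qed
  qed
  also have "\<dots> = of_real (tgm (gram v) (gram u))" by (simp add: tg)
  finally show ?thesis using bx ox by blast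
qed



lemma Qmat_gram: "Qmat c \<eta> = gram (\<lambda>j. c j \<eta>)"
  by (simp add: Qmat_def gram_def)

theorem theorem1p4:
  fixes a b :: "'l::finite \<Rightarrow> 'h::{complex_inner, complete_space} \<Rightarrow> 'h"
  assumes "\<And>j. bop (a j)"
    and "\<And>j. bop (b j)"
    and "\<exists>x::'h. x \<noteq> 0"
  shows "superop_norm (elem_op a b) =
    Sup {tgm (Qmat (\<lambda>j. adj (a j)) \<xi>) (Qmat b \<eta>) | \<xi> \<eta>. norm \<xi> = 1 \<and> norm \<eta> = 1}"
proof -
  note ba = assms(1) and bb = assms(2)
  define T where "T = elem_op a b"
  define L where "L = {onorm (T x) | x. bop x \<and> onorm x \<le> 1}"
  define R where "R = {tgm (Qmat (\<lambda>j. adj (a j)) \<xi>) (Qmat b \<eta>) | \<xi> \<eta>. norm \<xi> = 1 \<and> norm \<eta> = 1}"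
  define K where "K = (\<Sum>j\<in>UNIV. onorm (a j) * onorm (b j))"
  have Tapp: "T x \<eta> = (\<Sum>j\<in>UNIV. a j (x (b j \<eta>)))" for x \<eta> by (simp add: T_def elem_op_def)
  have Tbl: "bounded_linear (T x)" if "bop x" for x
    unfolding T_def elem_op_def
    by (intro bounded_linear_sum bounded_linear_compose[OF bop_bl[OF ba]]
        bounded_linear_compose[OF bop_bl[OF that]] bop_bl[OF bb])
  have onn: "0 \<le> onorm f" if "bop f" for f by (rule onorm_pos_le[OF bop_bl[OF that]])
  have K0: "0 \<le> K" unfolding K_def using onn ba bb by (intro sum_nonneg mult_nonneg_nonneg) auto
  have TK: "onorm (T x) \<le> K" if x: "bop x" "onorm x \<le> 1" for x
  proof (rule onorm_bound[OF K0])
    fix \<eta>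
    have "norm (T x \<eta>) \<le> (\<Sum>j\<in>UNIV. norm (a j (x (b j \<eta>))))" unfolding Tapp by (rule norm_sum)
    also have "\<dots> \<le> (\<Sum>j\<in>UNIV. onorm (a j) * onorm (b j) * norm \<eta>)"
    proof (intro sum_mono)
      fix j
      have "norm (a j (x (b j \<eta>))) \<le> onorm (a j) * norm (x (b j \<eta>))" by (rule bop_bound[OF ba])
      also have "\<dots> \<le> onorm (a j) * (onorm x * norm (b j \<eta>))"
        by (intro mult_left_mono bop_bound[OF x(1)] onn[OF ba])
      also have "\<dots> \<le> onorm (a j) * (1 * (onorm (b j) * norm \<eta>))"
        using x(2) bop_bound[OF bb, of j \<eta>] onn[OF ba, of j] onn[OF x(1)]
        by (intro mult_left_mono mult_mono) auto
      finally show "norm (a j (x (b j \<eta>))) \<le> onorm (a j) * onorm (b j) * norm \<eta>" by (simp add: mult.assoc)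
    qed
    also have "\<dots> = K * norm \<eta>" by (simp add: K_def sum_distrib_right)
    finally show "norm (T x \<eta>) \<le> K * norm \<eta>" .
  qed
  have Tinner: "cinner (T x \<eta>) \<xi> = (\<Sum>j\<in>UNIV. cinner (x (b j \<eta>)) (adj (a j) \<xi>))" for x \<eta> \<xi>
    unfolding Tapp by (simp add: cinner_sum_left adj_eq[OF ba])
  have tgR: "tgm (Qmat (\<lambda>j. adj (a j)) \<xi>) (Qmat b \<eta>) = tgm (gram (\<lambda>j. adj (a j) \<xi>)) (gram (\<lambda>j. b j \<eta>))"
    for \<xi> \<eta> by (simp add: Qmat_gram)
  have x0: "bop (\<lambda>_::'h. 0::'h)" "onorm (\<lambda>_::'h. 0::'h) \<le> 1"
    by (auto simp: bop_def onorm_zero)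
  have Lne: "L \<noteq> {}" using x0 unfolding L_def by blast
  have Lbdd: "bdd_above L" unfolding L_def using TK by (intro bdd_aboveI[of _ K]) auto
  obtain e :: 'h where e: "norm e = 1"
  proof -
    obtain z :: 'h where "z \<noteq> 0" using assms(3) by blast
    then show ?thesis
      by (intro that[of "scaleC (of_real (1 / norm z)) z"]) (simp add: norm_scaleC norm_divide)
  qed
  have Rne: "R \<noteq> {}" using e unfolding R_def by blast
  have tg0: "0 \<le> tgm (gram v) (gram u)" for u v :: "'l \<Rightarrow> 'h"
    using key_upper[OF x0, of v u] by (rule order_trans[OF norm_ge_zero])
  have tgL: "tgm (Qmat (\<lambda>j. adj (a j)) \<xi>) (Qmat b \<eta>) \<le> onorm (T x)"
    if "norm \<xi> = 1" "norm \<eta> = 1" "bop x" "onorm x \<le> 1"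
       "(\<Sum>j\<in>UNIV. cinner (x (b j \<eta>)) (adj (a j) \<xi>)) = of_real (tgm (Qmat (\<lambda>j. adj (a j)) \<xi>) (Qmat b \<eta>))"
    for \<xi> \<eta> x
  proof -
    have "tgm (Qmat (\<lambda>j. adj (a j)) \<xi>) (Qmat b \<eta>) = cmod (cinner (T x \<eta>) \<xi>)"
      using that(5) tgR[of \<xi> \<eta>] tg0 by (simp add: Tinner)
    also have "\<dots> \<le> norm (T x \<eta>) * norm \<xi>" by (rule Cauchy_Schwarz)
    also have "\<dots> \<le> onorm (T x) * norm \<eta>" using that(1) onorm[OF Tbl[OF that(3)]] by simp
    finally show ?thesis using that(2) by simp
  qed
  have attain: "\<exists>x. bop x \<and> onorm x \<le> 1 \<and>
      (\<Sum>j\<in>UNIV. cinner (x (b j \<eta>)) (adj (a j) \<xi>)) = of_real (tgm (Qmat (\<lambda>j. adj (a j)) \<xi>) (Qmat b \<eta>))"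
    for \<xi> \<eta>
    using key_attain[of "\<lambda>j. b j \<eta>" "\<lambda>j. adj (a j) \<xi>"] by (simp add: tgR)
  have Rbdd: "bdd_above R"
  proof (rule bdd_aboveI[of _ K])
    fix r assume "r \<in> R"
    then obtain \<xi> \<eta> where r: "r = tgm (Qmat (\<lambda>j. adj (a j)) \<xi>) (Qmat b \<eta>)" "norm \<xi> = 1" "norm \<eta> = 1"
      unfolding R_def by blast
    obtain x where x: "bop x" "onorm x \<le> 1"
      "(\<Sum>j\<in>UNIV. cinner (x (b j \<eta>)) (adj (a j) \<xi>)) = of_real (tgm (Qmat (\<lambda>j. adj (a j)) \<xi>) (Qmat b \<eta>))"
      using attain by blast
    show "r \<le> K" using tgL[OF r(2,3) x] TK[OF x(1,2)] r(1) by simp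
  qed
  have "Sup L \<le> Sup R"
  proof (rule cSup_least[OF Lne])
    fix l assume "l \<in> L"
    then obtain x where x: "bop x" "onorm x \<le> 1" and l: "l = onorm (T x)" unfolding L_def by blast
    have SR0: "0 \<le> Sup R"
    proof -
      obtain r where "r \<in> R" using Rne by blast
      then have "0 \<le> r" unfolding R_def using tg0 tgR by auto
      also have "r \<le> Sup R" by (rule cSup_upper[OF \<open>r \<in> R\<close> Rbdd])
      finally show ?thesis .
    qed
    have unit: "norm (T x \<eta>) \<le> Sup R" if \<eta>: "norm \<eta> = 1" for \<eta>
    proof (cases "T x \<eta> = 0")
      case True then show ?thesis using SR0 by simp
    next
      case False
      define \<xi> where "\<xi> = scaleC (of_real (1 / norm (T x \<eta>))) (T x \<eta>)"
      have n\<xi>: "norm \<xi> = 1" using False by (simp add: \<xi>_def norm_scaleC norm_divide)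
      have "cinner (T x \<eta>) \<xi> = of_real (norm (T x \<eta>))"
        using False by (simp add: \<xi>_def cinner_scaleC_right cinner_self_real power2_eq_square)
      then have "norm (T x \<eta>) = cmod (\<Sum>j\<in>UNIV. cinner (x (b j \<eta>)) (adj (a j) \<xi>))"
        by (simp add: Tinner[symmetric])
      also have "\<dots> \<le> tgm (gram (\<lambda>j. adj (a j) \<xi>)) (gram (\<lambda>j. b j \<eta>))" by (rule key_upper[OF x])
      also have "\<dots> = tgm (Qmat (\<lambda>j. adj (a j)) \<xi>) (Qmat b \<eta>)" by (simp add: tgR)
      also have "\<dots> \<le> Sup R" using n\<xi> \<eta> by (intro cSup_upper[OF _ Rbdd]) (auto simp: R_def)
      finally show ?thesis .
    qed
    show "l \<le> Sup R" unfolding l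
    proof (rule onorm_bound[OF SR0])
      fix \<eta>
      show "norm (T x \<eta>) \<le> Sup R * norm \<eta>"
      proof (cases "\<eta> = 0")
        case True
        then show ?thesis using Tapp[of x 0] bop_zero[OF bb] bop_zero[OF x(1)] bop_zero[OF ba] by simp
      next
        case False
        define \<eta>1 where "\<eta>1 = scaleR (1 / norm \<eta>) \<eta>"
        have n1: "norm \<eta>1 = 1" using False by (simp add: \<eta>1_def)
        have "\<eta> = scaleR (norm \<eta>) \<eta>1" using False by (simp add: \<eta>1_def)
        then have "T x \<eta> = scaleR (norm \<eta>) (T x \<eta>1)"
          using linear_cmul[OF bounded_linear.linear[OF Tbl[OF x(1)]], of "norm \<eta>" \<eta>1] by simp
        then have "norm (T x \<eta>) = norm \<eta> * norm (T x \<eta>1)" by simp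
        also have "\<dots> \<le> norm \<eta> * Sup R" using unit[OF n1] by (intro mult_left_mono) auto
        finally show ?thesis by (simp add: mult.commute)
      qed
    qed
  qed
  moreover have "Sup R \<le> Sup L"
  proof (rule cSup_least[OF Rne])
    fix r assume "r \<in> R"
    then obtain \<xi> \<eta> where r: "r = tgm (Qmat (\<lambda>j. adj (a j)) \<xi>) (Qmat b \<eta>)" "norm \<xi> = 1" "norm \<eta> = 1"
      unfolding R_def by blast
    obtain x where x: "bop x" "onorm x \<le> 1"
      "(\<Sum>j\<in>UNIV. cinner (x (b j \<eta>)) (adj (a j) \<xi>)) = of_real (tgm (Qmat (\<lambda>j. adj (a j)) \<xi>) (Qmat b \<eta>))"
      using attain by blast
    have "r \<le> onorm (T x)" using tgL[OF r(2,3) x] r(1) by simp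
    also have "\<dots> \<le> Sup L" using x by (intro cSup_upper[OF _ Lbdd]) (auto simp: L_def)
    finally show "r \<le> Sup L" .
  qed
  ultimately have "Sup L = Sup R" by simp
  then show ?thesis unfolding superop_norm_def L_def R_def T_def .
qed

end
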